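(* Consider the finite difference scheme below with the FIR operators $\mathbb{D}_t^{\alpha}$ and $\mathbb{D}_t^{\alpha/2}$, and let $\{u_i^k: 0\le i\le N_S,\ 0\le k\le N_T\}$ be a solution of it for given data $f_i^k$ and initial values $u_i^0$. Then for every $1\le n\le N_T$, $$\Delta t\sum_{k=1}^n\|u^k\|_\infty^2\le\frac{2(1+\sqrt{1+L^2\mu})}{L\mu}\Big(\rho\|u^0\|^2+\varrho[(u_0^0)^2+(u_{N_S}^0)^2]+\frac{\Delta t}{8\nu}\sum_{k=1}^n[(hf_0^k)^2+(hf_{N_S}^k)^2]+\frac{\Delta t}{\mu}\sum_{k=1}^nh\sum_{i=1}^{N_S-1}(f_i^k)^2\Big),$$ where $\rho=\frac{t_n^{1-\alpha}-\alpha(1-\alpha)\varepsilon t_{n-1}\Delta t}{\Gamma(2-\alpha)}$, $\mu=\frac{t_n^{-\alpha}-2\alpha\varepsilon t_{n-1}}{\Gamma(1-\alpha)}$, $\varrho=\frac{t_n^{1-\alpha/2}-\frac\alpha2(1-\frac\alpha2)\varepsilon t_{n-1}\Delta t}{\Gamma(2-\frac\alpha2)}$, $\nu=\frac{t_n^{-\alpha/2}-\alpha\varepsilon t_{n-1}}{\Gamma(1-\frac\alpha2)}$.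
   Context: Let $0<\alpha<1$, $x_l<x_r$, $L=x_r-x_l$, $T>0$, $N_T,N_S$ positive integers, $\Delta t=T/N_T$, $t_k=k\Delta t$, $h=(x_r-x_l)/N_S$, $x_i=x_l+ih$. For a grid vector $v=(v_0,\dots,v_{N_S})$: $\delta_xv_{i+1/2}=(v_{i+1}-v_i)/h$, $\delta_x^2v_i=(\delta_xv_{i+1/2}-\delta_xv_{i-1/2})/h$; $(v,w)=h\big[\tfrac12v_0w_0+\sum_{i=1}^{N_S-1}v_iw_i+\tfrac12v_{N_S}w_{N_S}\big]$, $\|v\|^2=(v,v)$, $\|\delta_xv\|^2=h\sum_{i=1}^{N_S}(\delta_xv_{i-1/2})^2$, $\|v\|_\infty=\max_i|v_i|$. For $\beta\in\{\alpha,\alpha/2\}$ let $s_j^{(\beta)}>0,\omega_j^{(\beta)}>0$ ($j=1,\dots,N_{\exp}$) satisfy $|t^{-1-\beta}-\sum_j\omega_j^{(\beta)}e^{-s_j^{(\beta)}t}|\le\varepsilon$ for all $t\in[\Delta t,T]$. The FIR operator acts on a time sequence $(g^k)_{k\ge0}$ by $$\mathbb{D}_t^\beta g^n=\frac{g^n-g^{n-1}}{\Delta t^\beta\Gamma(2-\beta)}+\frac{1}{\Gamma(1-\beta)}\Big[\frac{g^{n-1}}{\Delta t^\beta}-\frac{g^0}{t_n^\beta}-\beta\sum_{j}\omega_j^{(\beta)}U_j^n\Big],$$ with $U_j^1=0$ and for $n\ge2$, writing $s=s_j^{(\beta)}$, $U_j^n=e^{-s\Delta t}U_j^{n-1}+\frac{e^{-s\Delta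 t}}{s^2\Delta t}[(e^{-s\Delta t}-1+s\Delta t)g^{n-1}+(1-e^{-s\Delta t}-e^{-s\Delta t}s\Delta t)g^{n-2}]$; it is applied at each fixed spatial index $i$ to $k\mapsto u_i^k$. The scheme is: $\mathbb{D}_t^\alpha u_i^n=\delta_x^2u_i^n+f_i^n$ for $1\le i\le N_S-1$, $1\le n\le N_T$; $\mathbb{D}_t^\alpha u_0^n=\frac2h[\delta_xu_{1/2}^n-\mathbb{D}_t^{\alpha/2}u_0^n]+f_0^n$; $\mathbb{D}_t^\alpha u_{N_S}^n=\frac2h[-\delta_xu_{N_S-1/2}^n-\mathbb{D}_t^{\alpha/2}u_{N_S}^n]+f_{N_S}^n$ for $1\le n\le N_T$. *)

theory Defs
  imports "HOL-Analysis.Analysis"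
begin

text \<open>History variables U_j^n of the FIR operator for one exponential node s,
  step dt, acting on the time sequence g (g k = g^k).  U^1 = 0; U^0 is unused.\<close>
fun FIR_U :: "real \<Rightarrow> real \<Rightarrow> (nat \<Rightarrow> real) \<Rightarrow> nat \<Rightarrow> real" where
  "FIR_U dt s g 0 = 0"
| "FIR_U dt s g (Suc 0) = 0"
| "FIR_U dt s g (Suc (Suc m)) =
     exp (- s * dt) * FIR_U dt s g (Suc m)
   + exp (- s * dt) / (s^2 * dt) *
       ((exp (- s * dt) - 1 + s * dt) * g (Suc m)
        + (1 - exp (- s * dt) - exp (- s * dt) * s * dt) * g m)"

definition FIR :: "real \<Rightarrow> real \<Rightarrow> nat \<Rightarrow> (nat \<Rightarrow> real) \<Rightarrow> (nat \<Rightarrow> real)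
                    \<Rightarrow> (nat \<Rightarrow> real) \<Rightarrow> nat \<Rightarrow> real" where
  "FIR dt \<beta> Nexp w s g n =
     (g n - g (n - 1)) / (dt powr \<beta> * Gamma (2 - \<beta>))
   + 1 / Gamma (1 - \<beta>) *
       (g (n - 1) / dt powr \<beta> - g 0 / (real n * dt) powr \<beta>
        - \<beta> * (\<Sum>j = 1..Nexp. w j * FIR_U dt (s j) g n))"

definition SOE_approx :: "real \<Rightarrow> real \<Rightarrow> real \<Rightarrow> real \<Rightarrow> nat \<Rightarrow> (nat \<Rightarrow> real)
                         \<Rightarrow> (nat \<Rightarrow> real) \<Rightarrow> bool" where
  "SOE_approx \<beta> dt T \<epsilon> Nexp w s \<longleftrightarrow>
     (\<forall>j\<in>{1..Nexp}. s j > 0 \<and> w j > 0) \<and>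
     (\<forall>t\<in>{dt..T}. \<bar>t powr (-1 - \<beta>) - (\<Sum>j = 1..Nexp. w j * exp (- s j * t))\<bar> \<le> \<epsilon>)"

text \<open>delta_x v_{i+1/2} = (v_{i+1} - v_i)/h\<close>
definition dx :: "real \<Rightarrow> (nat \<Rightarrow> real) \<Rightarrow> nat \<Rightarrow> real" where
  "dx h v i = (v (Suc i) - v i) / h"

text \<open>delta_x^2 v_i, for i \<ge> 1\<close>
definition dxx :: "real \<Rightarrow> (nat \<Rightarrow> real) \<Rightarrow> nat \<Rightarrow> real" where
  "dxx h v i = (dx h v i - dx h v (i - 1)) / h"

definition gnorm2 :: "real \<Rightarrow> nat \<Rightarrow> (nat \<Rightarrow> real) \<Rightarrow> real" where
  "gnorm2 h NS v = h * ((v 0)^2 / 2 + (\<Sum>i = 1..NS - 1. (v i)^2) + (v NS)^2 / 2)"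

definition gnorm_inf :: "nat \<Rightarrow> (nat \<Rightarrow> real) \<Rightarrow> real" where
  "gnorm_inf NS v = Max ((\<lambda>i. \<bar>v i\<bar>) ` {0..NS})"

end

theory Submission
  imports Defs
begin



lemma powr_diff_lower:
  fixes j g :: real
  assumes "0 \<le> j" "0 < g" "g < 1"
  shows "(j+1) powr g - j powr g \<ge> g * (j+1) powr (g-1)"
proof (cases "j = 0")
  case True then show ?thesis using assms by simp
next
  case False
  then have jp: "j > 0" using assms by simp
  have "\<exists>z. j < z \<and> z < j+1 \<and> (j+1) powr g - j powr g = ((j+1) - j) * (g * z powr (g-1))"
    by (rule MVT2) (use jp in \<open>auto intro!: has_real_derivative_powr\<close>)
  then obtain z where z: "j < z" "z < j+1" "(j+1) powr g - j powr g = ((j+1) - j) * (g * z powr (g-1))"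
    by blast
  have "z powr (g-1) \<ge> (j+1) powr (g-1)" using z jp assms by (intro powr_mono2') auto
  then show ?thesis using z assms by (simp add: mult_left_mono)
qed

lemma powr_diff_upper:
  fixes j g :: real
  assumes "0 < j" "0 < g" "g < 1"
  shows "(j+1) powr g - j powr g \<le> g * j powr (g-1)"
proof -
  have "\<exists>z. j < z \<and> z < j+1 \<and> (j+1) powr g - j powr g = ((j+1) - j) * (g * z powr (g-1))"
    by (rule MVT2) (use assms in \<open>auto intro!: has_real_derivative_powr\<close>)
  then obtain z where z: "j < z" "z < j+1" "(j+1) powr g - j powr g = ((j+1) - j) * (g * z powr (g-1))"
    by blast
  have "z powr (g-1) \<le> j powr (g-1)" using z assms by (intro powr_mono2') auto
  then show ?thesis using z assms by (simp add: mult_left_mono)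
qed

lemma powr_diff_mono:
  fixes j g :: real
  assumes "0 \<le> j" "0 < g" "g < 1"
  shows "(j+2) powr g - (j+1) powr g \<le> (j+1) powr g - j powr g"
  using powr_diff_lower[OF assms] powr_diff_upper[of "j+1" g] assms
  by (simp add: add.assoc)



definition L1op :: "(nat \<Rightarrow> real) \<Rightarrow> (nat \<Rightarrow> real) \<Rightarrow> nat \<Rightarrow> real" where
  "L1op a g k = (\<Sum>i<k. a (k - 1 - i) * (g (Suc i) - g i))"

lemma abel_pos:
  fixes b y :: "nat \<Rightarrow> real"
  assumes "\<And>i. Suc i \<le> m \<Longrightarrow> b i \<le> b (Suc i)" "b 0 \<ge> 0" "\<And>i. i \<le> Suc m \<Longrightarrow> y i \<ge> 0"
  shows "(\<Sum>i<Suc m. b i * (y i - y (Suc i))) + b m * y (Suc m) \<ge> 0"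
  using assms
proof (induction m)
  case 0
  then have "b 0 * y 0 \<ge> 0" by simp
  then show ?case by (simp add: algebra_simps)
next
  case (Suc m)
  have IH: "(\<Sum>i<Suc m. b i * (y i - y (Suc i))) + b m * y (Suc m) \<ge> 0"
    using Suc by auto
  have "(b (Suc m) - b m) * y (Suc m) \<ge> 0" using Suc.prems by auto
  then show ?case using IH by (simp add: algebra_simps)
qed

lemma L1_pos:
  fixes a g :: "nat \<Rightarrow> real"
  assumes anon: "\<And>j. a j \<ge> 0" and adec: "\<And>j. a (Suc j) \<le> a j"
  shows "2 * g k * L1op a g k \<ge> L1op a (\<lambda>i. (g i)^2) k"
proof (cases k)
  case 0 then show ?thesis by (simp add: L1op_def)
next
  case (Suc m)
  define b where "b i = a (k - 1 - i)" for i
  define y where "y i = (g k - g i)^2" for i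
  have "2 * g k * L1op a g k - L1op a (\<lambda>i. (g i)^2) k
      = (\<Sum>i<Suc m. b i * (y i - y (Suc i)))"
    unfolding L1op_def b_def y_def Suc sum_distrib_left sum_subtractf[symmetric]
    by (rule sum.cong) (auto simp: power2_eq_square algebra_simps)
  also have "\<dots> = (\<Sum>i<Suc m. b i * (y i - y (Suc i))) + b m * y (Suc m)"
    by (simp add: y_def Suc)
  also have "\<dots> \<ge> 0"
  proof (rule abel_pos)
    fix i assume "Suc i \<le> m"
    then have "k - 1 - i = Suc (k - 1 - Suc i)" using Suc by simp
    then show "b i \<le> b (Suc i)" unfolding b_def using adec by metis
  qed (auto simp: b_def anon y_def)
  finally show ?thesis by simp
qed

lemma sum_L1:
  fixes a G :: "nat \<Rightarrow> real"
  shows "(\<Sum>k=1..n. L1op a G k) = (\<Sum>i<n. a (n - 1 - i) * G (Suc i)) - (\<Sum>l<n. a l) * G 0"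
proof (induction n)
  case 0 then show ?case by simp
next
  case (Suc n)
  have sh: "(\<Sum>i<Suc n. a (n - i) * G i) = a n * G 0 + (\<Sum>i<n. a (n - 1 - i) * G (Suc i))"
    by (subst sum.lessThan_Suc_shift) simp
  have "L1op a G (Suc n) = (\<Sum>i<Suc n. a (n - i) * G (Suc i)) - (\<Sum>i<Suc n. a (n - i) * G i)"
  proof -
    have "L1op a G (Suc n) = (\<Sum>i<Suc n. a (n - i) * G (Suc i) - a (n - i) * G i)"
      unfolding L1op_def by (simp add: algebra_simps)
    then show ?thesis by (simp only: sum_subtractf)
  qed
  moreover have "(\<Sum>k=1..Suc n. L1op a G k) = (\<Sum>k=1..n. L1op a G k) + L1op a G (Suc n)"
    by simp
  moreover have "(\<Sum>l<Suc n. a l) = (\<Sum>l<n. a l) + a n" by simp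
  moreover have "(\<Sum>i<Suc n. a (Suc n - 1 - i) * G (Suc i)) = (\<Sum>i<Suc n. a (n - i) * G (Suc i))"
    by simp
  ultimately show ?case using Suc sh
    by (simp add: algebra_simps)
qed



lemma Gamma2: fixes b :: real assumes "0 < b" "b < 1" shows "Gamma (2 - b) = (1 - b) * Gamma (1 - b)"
proof -
  have "1 - b \<notin> \<int>\<^sub>\<le>\<^sub>0"
  proof
    assume "1 - b \<in> \<int>\<^sub>\<le>\<^sub>0"
    then have "1 - b \<le> 0" by (rule nonpos_Ints_nonpos)
    with assms show False by simp
  qed
  from Gamma_plus1[OF this] show ?thesis by (simp add: algebra_simps)
qed

definition acoef :: "real \<Rightarrow> real \<Rightarrow> nat \<Rightarrow> real" where
  "acoef dt b j = dt powr (-b) * ((real j + 1) powr (1 - b) - real j powr (1 - b)) / Gamma (2 - b)"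

context
  fixes dt b :: real
  assumes dt: "dt > 0" and b: "0 < b" "b < 1"
begin

lemma acoef_nonneg: "acoef dt b j \<ge> 0"
proof -
  have "real j powr (1 - b) \<le> (real j + 1) powr (1 - b)" using b by (intro powr_mono2) auto
  then show ?thesis unfolding acoef_def using b dt by (auto intro!: divide_nonneg_pos)
qed

lemma acoef_dec: "acoef dt b (Suc j) \<le> acoef dt b j"
proof -
  have "(real j + 2) powr (1 - b) - (real j + 1) powr (1 - b) \<le> (real j + 1) powr (1 - b) - real j powr (1 - b)"
    using powr_diff_mono[of "real j" "1 - b"] b by auto
  then have "(real (Suc j) + 1) powr (1 - b) - real (Suc j) powr (1 - b) \<le> (real j + 1) powr (1 - b) - real j powr (1 - b)"
    by (simp add: add.commute add.left_commute)
  then show ?thesis unfolding acoef_def using b dt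
    by (intro divide_right_mono mult_left_mono) auto
qed

lemma acoef_0: "acoef dt b 0 = 1 / (dt powr b * Gamma (2 - b))"
  unfolding acoef_def using b by (simp add: powr_minus_divide)

lemma acoef_sum: "(\<Sum>l<n. acoef dt b l) = dt powr (-b) * real n powr (1 - b) / Gamma (2 - b)"
proof -
  have t: "(\<Sum>l<n. (1 + real l) powr (1-b) - real l powr (1-b)) = real n powr (1-b)"
    using sum_lessThan_telescope[of "\<lambda>l. real l powr (1-b)" n] by simp
  have "(\<Sum>l<n. acoef dt b l) = (dt powr (-b) / Gamma (2 - b)) * (\<Sum>l<n. (1 + real l) powr (1-b) - real l powr (1-b))"
    unfolding acoef_def sum_distrib_left by (rule sum.cong) (auto simp: add.commute)
  then show ?thesis using t by simp
qed

lemma acoef_lower: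
  assumes "j < n"
  shows "dt * acoef dt b j \<ge> dt * (real n * dt) powr (-b) / Gamma (1 - b)"
proof -
  have G: "Gamma (2 - b) = (1 - b) * Gamma (1 - b)" using Gamma2 b by simp
  have G1: "Gamma (1 - b) > 0" using b by simp
  have "(real j + 1) powr (1 - b) - real j powr (1 - b) \<ge> (1 - b) * (real j + 1) powr (1 - b - 1)"
    using powr_diff_lower[of "real j" "1 - b"] b by simp
  moreover have "(real j + 1) powr (-b) \<ge> real n powr (-b)"
    using assms b by (intro powr_mono2') auto
  moreover have "(1::real) - b - 1 = - b" by simp
  ultimately have "(real j + 1) powr (1 - b) - real j powr (1 - b) \<ge> (1 - b) * real n powr (-b)"
    using b by (smt (verit) mult_left_mono)
  then have "acoef dt b j \<ge> dt powr (-b) * ((1 - b) * real n powr (-b)) / Gamma (2 - b)"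
    unfolding acoef_def using b dt G1 G
    by (intro divide_right_mono mult_left_mono) auto
  also have "dt powr (-b) * ((1 - b) * real n powr (-b)) / Gamma (2 - b) = (real n * dt) powr (-b) / Gamma (1 - b)"
    unfolding G using b G1 by (simp add: powr_mult)
  finally show ?thesis using dt by (simp add: divide_simps mult_left_mono)
qed

end



definition PiL :: "real \<Rightarrow> (nat \<Rightarrow> real) \<Rightarrow> nat \<Rightarrow> real \<Rightarrow> real" where
  "PiL dt g i x = g i * ((real i + 1) * dt - x) / dt + g (Suc i) * (x - real i * dt) / dt"

definition IE :: "real \<Rightarrow> real \<Rightarrow> nat \<Rightarrow> (nat \<Rightarrow> real) \<Rightarrow> nat \<Rightarrow> real" where
  "IE dt s n g i = integral {real i * dt..(real i + 1) * dt} (\<lambda>x. exp (- s * (real n * dt - x)) * PiL dt g i x)"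

lemma IE_closed:
  assumes dt: "dt > 0" and s: "s > 0"
  shows "IE dt s (Suc (Suc i)) g i = exp (- s * dt) / (s^2 * dt) *
       ((exp (- s * dt) - 1 + s * dt) * g (Suc i)
        + (1 - exp (- s * dt) - exp (- s * dt) * s * dt) * g i)"
proof -
  define B where "B = (g (Suc i) - g i) / dt"
  define T' where "T' = (real i + 2) * dt"
  define F where "F x = exp (- s * (T' - x)) * (PiL dt g i x / s - B / s^2)" for x
  have Pd: "((\<lambda>x. PiL dt g i x) has_real_derivative B) (at x)" for x
    unfolding PiL_def B_def using dt
    by (auto intro!: derivative_eq_intros simp: field_simps)
  have Fd: "(F has_real_derivative exp (- s * (T' - x)) * PiL dt g i x) (at x)" for x
  proof -
    have E: "((\<lambda>x. exp (- s * (T' - x))) has_real_derivative exp (- s * (T' - x)) * s) (at x)"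
      by (auto intro!: derivative_eq_intros)
    have Q: "((\<lambda>x. PiL dt g i x / s - B / s^2) has_real_derivative B / s) (at x)"
      using s by (auto intro!: derivative_eq_intros Pd)
    have "(F has_real_derivative (exp (- s * (T' - x)) * s * (PiL dt g i x / s - B / s^2) + B / s * exp (- s * (T' - x)))) (at x)"
      unfolding F_def by (rule DERIV_mult[OF E Q])
    moreover have "exp (- s * (T' - x)) * s * (PiL dt g i x / s - B / s^2) + B / s * exp (- s * (T' - x)) = exp (- s * (T' - x)) * PiL dt g i x"
      using s by (simp add: field_simps power2_eq_square)
    ultimately show ?thesis by simp
  qed
  have hi: "((\<lambda>x. exp (- s * (T' - x)) * PiL dt g i x) has_integral (F ((real i + 1) * dt) - F (real i * dt)))
      {real i * dt..(real i + 1) * dt}"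
  proof (rule fundamental_theorem_of_calculus)
    show "real i * dt \<le> (real i + 1) * dt" using dt by simp
    fix x show "(F has_vector_derivative (exp (- s * (T' - x)) * PiL dt g i x)) (at x within {real i * dt..(real i + 1) * dt})"
      using Fd has_field_derivative_at_within has_real_derivative_iff_has_vector_derivative by blast
  qed
  have e1: "exp (- s * (T' - (real i + 1) * dt)) = exp (- s * dt)" unfolding T'_def by (simp add: algebra_simps)
  have e2: "exp (- s * (T' - real i * dt)) = exp (- s * dt) * exp (- s * dt)"
    unfolding T'_def by (simp add: algebra_simps flip: exp_add)
  have P1: "PiL dt g i ((real i + 1) * dt) = g (Suc i)" unfolding PiL_def using dt by (simp add: field_simps)
  have P0: "PiL dt g i (real i * dt) = g i" unfolding PiL_def using dt by (simp add: field_simps)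
  have "F ((real i + 1) * dt) - F (real i * dt) = exp (- s * dt) / (s^2 * dt) *
       ((exp (- s * dt) - 1 + s * dt) * g (Suc i)
        + (1 - exp (- s * dt) - exp (- s * dt) * s * dt) * g i)"
    unfolding F_def e1 e2 P1 P0 B_def using dt s
    by (simp add: field_simps power2_eq_square)
  moreover have "IE dt s (Suc (Suc i)) g i = F ((real i + 1) * dt) - F (real i * dt)"
    unfolding IE_def using integral_unique[OF hi] by (simp add: T'_def add.commute)
  ultimately show ?thesis by simp
qed

lemma IE_shift:
  "exp (- s * dt) * IE dt s n g i = IE dt s (Suc n) g i"
proof -
  have "IE dt s (Suc n) g i = integral {real i * dt..(real i + 1) * dt} (\<lambda>x. exp (- s * dt) * (exp (- s * (real n * dt - x)) * PiL dt g i x))"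
    unfolding IE_def by (rule integral_cong) (simp add: algebra_simps flip: exp_add)
  then show ?thesis unfolding IE_def by simp
qed

lemma U_repr:
  assumes dt: "dt > 0" and s: "s > 0"
  shows "FIR_U dt s g (Suc p) = (\<Sum>i<p. IE dt s (Suc p) g i)"
proof (induction p)
  case 0 then show ?case by simp
next
  case (Suc p)
  have "FIR_U dt s g (Suc (Suc p)) = exp (- s * dt) * FIR_U dt s g (Suc p) + IE dt s (Suc (Suc p)) g p"
    using IE_closed[OF dt s, of p g] by simp
  also have "\<dots> = (\<Sum>i<p. exp (- s * dt) * IE dt s (Suc p) g i) + IE dt s (Suc (Suc p)) g p"
    by (simp only: Suc sum_distrib_left)
  also have "\<dots> = (\<Sum>i<p. IE dt s (Suc (Suc p)) g i) + IE dt s (Suc (Suc p)) g p"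
    by (simp only: IE_shift)
  finally show ?case by simp
qed




lemma powr_deriv_rev:
  assumes "T' - x > 0"
  shows "((\<lambda>x. (T' - x) powr r) has_real_derivative (- (r * (T' - x) powr (r - 1)))) (at x)"
proof -
  have A: "((\<lambda>z. z powr r) has_real_derivative r * (T' - x) powr (r - 1)) (at (T' - x))"
    by (rule has_real_derivative_powr[OF assms])
  have B: "((\<lambda>x. T' - x) has_real_derivative -1) (at x)" by (auto intro!: derivative_eq_intros)
  have "((\<lambda>x. (T' - x) powr r) has_real_derivative (r * (T' - x) powr (r - 1)) * (-1)) (at x)"
    using DERIV_chain2[OF A B] by simp
  then show ?thesis by simp
qed

lemma IK_hasint:
  assumes dt: "dt > 0" and b: "0 < b" "b < 1" and i: "Suc i < n"
  shows "((\<lambda>x. (real n * dt - x) powr (-1 - b) * PiL dt g i x) has_integral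
     (((real (n - Suc i) * dt) powr (-b) * g (Suc i) - (real (n - i) * dt) powr (-b) * g i
       - (g (Suc i) - g i) * Gamma (1 - b) * acoef dt b (n - 1 - i)) / b))
     {real i * dt..(real i + 1) * dt}"
proof -
  define B where "B = (g (Suc i) - g i) / dt"
  define T' where "T' = real n * dt"
  define F where "F x = ((T' - x) powr (-b) * PiL dt g i x + B * (T' - x) powr (1 - b) / (1 - b)) / b" for x
  have Pd: "((\<lambda>x. PiL dt g i x) has_real_derivative B) (at x)" for x
    unfolding PiL_def B_def using dt
    by (auto intro!: derivative_eq_intros simp: field_simps)
  have Fd: "(F has_real_derivative (T' - x) powr (-1 - b) * PiL dt g i x) (at x)" if x: "x \<le> (real i + 1) * dt" for x
  proof -
    have pos: "T' - x > 0"
    proof -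
      have "real (Suc i) < real n" using i by linarith
      then have "(real i + 1) * dt < real n * dt" using dt by simp
      then show ?thesis using x unfolding T'_def by simp
    qed
    have D1: "((\<lambda>x. (T' - x) powr (-b) * PiL dt g i x) has_real_derivative
        (- (-b * (T' - x) powr (-b - 1))) * PiL dt g i x + B * (T' - x) powr (-b)) (at x)"
      using DERIV_mult[OF powr_deriv_rev[OF pos, of "-b"] Pd] by simp
    have D2: "((\<lambda>x. B * (T' - x) powr (1 - b) / (1 - b)) has_real_derivative
        B * (- ((1 - b) * (T' - x) powr (1 - b - 1))) / (1 - b)) (at x)"
      by (intro DERIV_cdivide DERIV_cmult powr_deriv_rev[OF pos])
    have "(F has_real_derivative ((- (-b * (T' - x) powr (-b - 1))) * PiL dt g i x + B * (T' - x) powr (-b)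
        + B * (- ((1 - b) * (T' - x) powr (1 - b - 1))) / (1 - b)) / b) (at x)"
      unfolding F_def by (intro DERIV_cdivide DERIV_add D1 D2)
    moreover have "((- (-b * (T' - x) powr (-b - 1))) * PiL dt g i x + B * (T' - x) powr (-b)
        + B * (- ((1 - b) * (T' - x) powr (1 - b - 1))) / (1 - b)) / b = (T' - x) powr (-1 - b) * PiL dt g i x"
    proof -
      have e: "-b - 1 = -1 - b" by simp
      show ?thesis unfolding e using b by (simp add: field_simps)
    qed
    ultimately show ?thesis by simp
  qed
  have hi: "((\<lambda>x. (T' - x) powr (-1 - b) * PiL dt g i x) has_integral (F ((real i + 1) * dt) - F (real i * dt)))
      {real i * dt..(real i + 1) * dt}"
  proof (rule fundamental_theorem_of_calculus)
    show "real i * dt \<le> (real i + 1) * dt" using dt by simp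
    fix x assume "x \<in> {real i * dt..(real i + 1) * dt}"
    then have "(F has_real_derivative ((T' - x) powr (-1 - b) * PiL dt g i x)) (at x within {real i * dt..(real i + 1) * dt})"
    proof -
      from \<open>x \<in> _\<close> have "x \<le> (real i + 1) * dt" by simp
      from has_field_derivative_at_within[OF Fd[OF this]] show ?thesis .
    qed
    then show "(F has_vector_derivative ((T' - x) powr (-1 - b) * PiL dt g i x)) (at x within {real i * dt..(real i + 1) * dt})"
      using has_real_derivative_iff_has_vector_derivative by blast
  qed
  define m where "m = n - 1 - i"
  have m1: "real (n - Suc i) = real m" and m0: "real (n - i) = real m + 1" using i by (auto simp: m_def)
  have e1: "T' - (real i + 1) * dt = real m * dt" and e0: "T' - real i * dt = (real m + 1) * dt"
    using i unfolding T'_def m_def by (auto simp: of_nat_diff algebra_simps)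
  have P1: "PiL dt g i ((real i + 1) * dt) = g (Suc i)" unfolding PiL_def using dt by (simp add: field_simps)
  have P0: "PiL dt g i (real i * dt) = g i" unfolding PiL_def using dt by (simp add: field_simps)
  have G: "Gamma (2 - b) = (1 - b) * Gamma (1 - b)" using Gamma2 b by simp
  have G1: "Gamma (1 - b) > 0" using b by simp
  have dtp: "dt powr (1 - b) = dt * dt powr (-b)"
  proof -
    have "dt powr (1 - b) = dt powr (1 + (-b))" by simp
    also have "\<dots> = dt powr 1 * dt powr (-b)" by (rule powr_add)
    finally show ?thesis using dt by simp
  qed
  have key: "B * ((real m * dt) powr (1 - b) - ((real m + 1) * dt) powr (1 - b)) / (1 - b)
      = - ((g (Suc i) - g i) * Gamma (1 - b) * acoef dt b m)"
  proof -
    define D where "D = (real m + 1) powr (1 - b) - real m powr (1 - b)"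
    define q where "q = dt powr (-b)"
    have "B * ((real m * dt) powr (1 - b) - ((real m + 1) * dt) powr (1 - b))
        = - ((B * dt) * q * D)"
      unfolding powr_mult dtp q_def D_def by (simp add: algebra_simps)
    also have "B * dt = g (Suc i) - g i" unfolding B_def using dt by simp
    finally have c: "B * ((real m * dt) powr (1 - b) - ((real m + 1) * dt) powr (1 - b)) = - ((g (Suc i) - g i) * q * D)" .
    have A: "acoef dt b m = q * D / ((1 - b) * Gamma (1 - b))" unfolding acoef_def G q_def D_def by simp
    have ne1: "Gamma (1 - b) \<noteq> 0" using G1 by (metis less_irrefl)
    have ne2: "1 - b \<noteq> 0" using b by simp
    note ne = ne1 ne2
    show ?thesis unfolding c A using ne by (simp add: field_simps)
  qed
  have "F ((real i + 1) * dt) - F (real i * dt) =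
     ((real m * dt) powr (-b) * g (Suc i) - ((real m + 1) * dt) powr (-b) * g i
      + B * ((real m * dt) powr (1 - b) - ((real m + 1) * dt) powr (1 - b)) / (1 - b)) / b"
  proof -
    have gen: "(p1 * g1 + B * c1 / (1 - b)) / b - (p0 * g0 + B * c0 / (1 - b)) / b
        = (p1 * g1 - p0 * g0 + B * (c1 - c0) / (1 - b)) / b" for p1 g1 c1 p0 g0 c0 :: real
      by (simp add: diff_divide_distrib add_divide_distrib right_diff_distrib)
    show ?thesis unfolding F_def e1 e0 P1 P0 by (rule gen)
  qed
  also have "\<dots> = ((real (n - Suc i) * dt) powr (-b) * g (Suc i) - (real (n - i) * dt) powr (-b) * g i
       - (g (Suc i) - g i) * Gamma (1 - b) * acoef dt b (n - 1 - i)) / b"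
    unfolding key m1 m0 m_def[symmetric] by simp
  finally have "F ((real i + 1) * dt) - F (real i * dt) = ((real (n - Suc i) * dt) powr (-b) * g (Suc i) - (real (n - i) * dt) powr (-b) * g i
       - (g (Suc i) - g i) * Gamma (1 - b) * acoef dt b (n - 1 - i)) / b" .
  then show ?thesis using hi unfolding T'_def by simp
qed




definition IKval :: "real \<Rightarrow> real \<Rightarrow> (nat \<Rightarrow> real) \<Rightarrow> nat \<Rightarrow> nat \<Rightarrow> real" where
  "IKval dt b g n i = ((real (n - Suc i) * dt) powr (-b) * g (Suc i) - (real (n - i) * dt) powr (-b) * g i
       - (g (Suc i) - g i) * Gamma (1 - b) * acoef dt b (n - 1 - i)) / b"

lemma lin_int:
  fixes p q x0 y :: real
  assumes "x0 \<le> y"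
  shows "((\<lambda>x. p + q * x) has_integral (p * (y - x0) + q * (y^2 - x0^2) / 2)) {x0..y}"
proof -
  have "((\<lambda>x. p + q * x) has_integral ((\<lambda>x. p * x + q * x^2 / 2) y - (\<lambda>x. p * x + q * x^2 / 2) x0)) {x0..y}"
  proof (rule fundamental_theorem_of_calculus[OF assms])
    fix x
    have "((\<lambda>x. p * x + q * x^2 / 2) has_real_derivative (p + q * x)) (at x within {x0..y})"
      by (auto intro!: derivative_eq_intros)
    then show "((\<lambda>x. p * x + q * x^2 / 2) has_vector_derivative (p + q * x)) (at x within {x0..y})"
      using has_real_derivative_iff_has_vector_derivative by blast
  qed
  then show ?thesis by (simp add: algebra_simps diff_divide_distrib right_diff_distrib)
qed

lemma Pi_cont: assumes "dt > 0" shows "continuous_on S (PiL dt g i)"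
  unfolding PiL_def using assms by (intro continuous_intros) auto

lemma IE_hasint: assumes "dt > 0" shows
  "((\<lambda>x. exp (- s * (real n * dt - x)) * PiL dt g i x) has_integral IE dt s n g i) {real i * dt..(real i + 1) * dt}"
  unfolding IE_def
  by (intro integrable_integral integrable_continuous_interval continuous_intros Pi_cont assms)

lemma err_interval:
  fixes w s :: "nat \<Rightarrow> real" and Nexp :: nat
  assumes dt: "dt > 0" and b: "0 < b" "b < 1" and i: "Suc i < n" and nT: "real n * dt \<le> T"
    and soe: "\<And>t. t \<in> {dt..T} \<Longrightarrow> \<bar>t powr (-1 - b) - (\<Sum>j = 1..Nexp. w j * exp (- s j * t))\<bar> \<le> \<epsilon>"
  shows "\<bar>IKval dt b g n i - (\<Sum>j = 1..Nexp. w j * IE dt (s j) n g i)\<bar> \<le> \<epsilon> * dt * (\<bar>g i\<bar> + \<bar>g (Suc i)\<bar>) / 2"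
proof -
  define S where "S = {real i * dt..(real i + 1) * dt}"
  define f where "f x = ((real n * dt - x) powr (-1 - b) - (\<Sum>j = 1..Nexp. w j * exp (- s j * (real n * dt - x)))) * PiL dt g i x" for x
  have h1: "((\<lambda>x. (real n * dt - x) powr (-1 - b) * PiL dt g i x) has_integral IKval dt b g n i) S"
    unfolding S_def IKval_def by (rule IK_hasint[OF dt b i])
  have h2: "((\<lambda>x. \<Sum>j = 1..Nexp. w j * (exp (- s j * (real n * dt - x)) * PiL dt g i x)) has_integral
      (\<Sum>j = 1..Nexp. w j * IE dt (s j) n g i)) S"
    unfolding S_def
  proof (rule has_integral_sum)
    show "finite {1..Nexp}" by (rule finite_atLeastAtMost)
  next
    fix j show "((\<lambda>x. w j * (exp (- s j * (real n * dt - x)) * PiL dt g i x)) has_integral w j * IE dt (s j) n g i)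
      {real i * dt..(real i + 1) * dt}"
      by (rule has_integral_mult_right[OF IE_hasint[OF dt]])
  qed
  have hf: "(f has_integral (IKval dt b g n i - (\<Sum>j = 1..Nexp. w j * IE dt (s j) n g i))) S"
  proof -
    have "((\<lambda>x. (real n * dt - x) powr (-1 - b) * PiL dt g i x - (\<Sum>j = 1..Nexp. w j * (exp (- s j * (real n * dt - x)) * PiL dt g i x)))
        has_integral (IKval dt b g n i - (\<Sum>j = 1..Nexp. w j * IE dt (s j) n g i))) S"
      by (rule has_integral_diff[OF h1 h2])
    moreover have "(\<lambda>x. (real n * dt - x) powr (-1 - b) * PiL dt g i x - (\<Sum>j = 1..Nexp. w j * (exp (- s j * (real n * dt - x)) * PiL dt g i x))) = f"
      unfolding f_def by (auto simp: algebra_simps sum_distrib_left sum_distrib_right)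
    ultimately show ?thesis by simp
  qed
  define G where "G x = \<epsilon> * (\<bar>g i\<bar> * ((real i + 1) * dt - x) / dt + \<bar>g (Suc i)\<bar> * (x - real i * dt) / dt)" for x
  have hG: "(G has_integral (\<epsilon> * dt * (\<bar>g i\<bar> + \<bar>g (Suc i)\<bar>) / 2)) S"
  proof -
    define p where "p = \<epsilon> * (\<bar>g i\<bar> * (real i + 1) - \<bar>g (Suc i)\<bar> * real i)"
    define q where "q = \<epsilon> * (\<bar>g (Suc i)\<bar> - \<bar>g i\<bar>) / dt"
    have Geq: "G = (\<lambda>x. p + q * x)" unfolding G_def p_def q_def using dt by (auto simp: field_simps)
    have val: "p * ((real i + 1) * dt - real i * dt) + q * (((real i + 1) * dt)^2 - (real i * dt)^2) / 2
        = \<epsilon> * dt * (\<bar>g i\<bar> + \<bar>g (Suc i)\<bar>) / 2"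
      unfolding p_def q_def using dt by (simp add: field_simps power2_eq_square)
    have hint: "((\<lambda>x. p + q * x) has_integral (p * ((real i + 1) * dt - real i * dt) + q * (((real i + 1) * dt)^2 - (real i * dt)^2) / 2)) S"
      unfolding S_def using dt by (intro lin_int) simp
    show ?thesis unfolding Geq val[symmetric] by (rule hint)
  qed
  have bound: "\<bar>f x\<bar> \<le> G x" if x: "x \<in> S" for x
  proof -
    have x1: "real i * dt \<le> x" "x \<le> (real i + 1) * dt" using x unfolding S_def by auto
    have "real (Suc i) + 1 \<le> real n" using i by linarith
    then have "(real i + 2) * dt \<le> real n * dt" using dt by (intro mult_right_mono) auto
    then have tl: "dt \<le> real n * dt - x" using x1 by (simp add: algebra_simps)
    have "0 \<le> real i * dt" using dt by simp
    then have tu: "real n * dt - x \<le> T" using x1 nT by simp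
    have e: "\<bar>(real n * dt - x) powr (-1 - b) - (\<Sum>j = 1..Nexp. w j * exp (- s j * (real n * dt - x)))\<bar> \<le> \<epsilon>"
      using soe tl tu by auto
    have ph: "0 \<le> ((real i + 1) * dt - x) / dt" "0 \<le> (x - real i * dt) / dt" using x1 dt by auto
    have "\<bar>PiL dt g i x\<bar> \<le> \<bar>g i\<bar> * (((real i + 1) * dt - x) / dt) + \<bar>g (Suc i)\<bar> * ((x - real i * dt) / dt)"
    proof -
      have "PiL dt g i x = g i * (((real i + 1) * dt - x) / dt) + g (Suc i) * ((x - real i * dt) / dt)"
        unfolding PiL_def by simp
      also have "\<bar>\<dots>\<bar> \<le> \<bar>g i * (((real i + 1) * dt - x) / dt)\<bar> + \<bar>g (Suc i) * ((x - real i * dt) / dt)\<bar>"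
        by (rule abs_triangle_ineq)
      also have "\<dots> = \<bar>g i\<bar> * (((real i + 1) * dt - x) / dt) + \<bar>g (Suc i)\<bar> * ((x - real i * dt) / dt)"
        unfolding abs_mult using ph by (simp only: abs_of_nonneg)
      finally show ?thesis .
    qed
    then have "\<bar>f x\<bar> \<le> \<epsilon> * (\<bar>g i\<bar> * (((real i + 1) * dt - x) / dt) + \<bar>g (Suc i)\<bar> * ((x - real i * dt) / dt))"
      unfolding f_def abs_mult using e by (intro mult_mono) auto
    then show ?thesis unfolding G_def by simp
  qed
  have le1: "IKval dt b g n i - (\<Sum>j = 1..Nexp. w j * IE dt (s j) n g i) \<le> \<epsilon> * dt * (\<bar>g i\<bar> + \<bar>g (Suc i)\<bar>) / 2"
    by (rule has_integral_le[OF hf hG]) (use bound in force)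
  have le2: "- (IKval dt b g n i - (\<Sum>j = 1..Nexp. w j * IE dt (s j) n g i)) \<le> \<epsilon> * dt * (\<bar>g i\<bar> + \<bar>g (Suc i)\<bar>) / 2"
    by (rule has_integral_le[OF has_integral_neg[OF hf] hG]) (use bound in force)
  show ?thesis using le1 le2 by linarith
qed




lemma FIR_decomp:
  fixes w s :: "nat \<Rightarrow> real" and Nexp :: nat
  assumes dt: "dt > 0" and b: "0 < b" "b < 1" and spos: "\<And>j. j \<in> {1..Nexp} \<Longrightarrow> s j > 0" and n: "n \<ge> 1"
  shows "FIR dt b Nexp w s g n = L1op (acoef dt b) g n
     + b / Gamma (1 - b) * (\<Sum>i<n - 1. IKval dt b g n i - (\<Sum>j = 1..Nexp. w j * IE dt (s j) n g i))"
proof -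
  obtain p where np: "n = Suc p" using n by (cases n) auto
  have G1: "Gamma (1 - b) > 0" using b by simp
  have ne1: "Gamma (1 - b) \<noteq> 0" using G1 by (metis less_irrefl)
  have bne: "b \<noteq> 0" using b by simp
  define W where "W = (\<Sum>j = 1..Nexp. w j * FIR_U dt (s j) g n)"
  define W' where "W' = (\<Sum>i<p. \<Sum>j = 1..Nexp. w j * IE dt (s j) n g i)"
  have WW: "W = W'"
  proof -
    have "W = (\<Sum>j = 1..Nexp. \<Sum>i<p. w j * IE dt (s j) n g i)"
      unfolding W_def np using U_repr[OF dt] spos by (auto simp: sum_distrib_left intro!: sum.cong)
    also have "\<dots> = W'" unfolding W'_def by (rule sum.swap)
    finally show ?thesis .
  qed
  define SL where "SL = (\<Sum>i<p. acoef dt b (p - i) * (g (Suc i) - g i))"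
  define f where "f i = (real (n - i) * dt) powr (-b) * g i" for i
  have T: "b * (\<Sum>i<p. IKval dt b g n i) = dt powr (-b) * g p - (real n * dt) powr (-b) * g 0 - Gamma (1 - b) * SL"
  proof -
    have "b * (\<Sum>i<p. IKval dt b g n i) = (\<Sum>i<p. (f (Suc i) - f i) - Gamma (1 - b) * (acoef dt b (p - i) * (g (Suc i) - g i)))"
      unfolding sum_distrib_left
    proof (intro sum.cong refl)
      fix i assume "i \<in> {..<p}"
      have "b * IKval dt b g n i = (real (n - Suc i) * dt) powr (-b) * g (Suc i) - (real (n - i) * dt) powr (-b) * g i
       - (g (Suc i) - g i) * Gamma (1 - b) * acoef dt b (n - 1 - i)"
        unfolding IKval_def using bne by simp
      then show "b * IKval dt b g n i = f (Suc i) - f i - Gamma (1 - b) * (acoef dt b (p - i) * (g (Suc i) - g i))"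
        unfolding f_def np by simp
    qed
    also have "\<dots> = (f p - f 0) - Gamma (1 - b) * SL"
      unfolding SL_def sum_subtractf[of "\<lambda>i. f (Suc i) - f i"] sum_lessThan_telescope sum_distrib_left by simp
    also have "f p - f 0 = dt powr (-b) * g p - (real n * dt) powr (-b) * g 0"
      unfolding f_def np by simp
    finally show ?thesis .
  qed
  have L: "L1op (acoef dt b) g n = acoef dt b 0 * (g n - g p) + SL"
    unfolding L1op_def SL_def np by simp
  have a0: "acoef dt b 0 = 1 / (dt powr b * Gamma (2 - b))" using acoef_0[OF dt b] .
  have FIRe: "FIR dt b Nexp w s g n = (g n - g p) / (dt powr b * Gamma (2 - b))
      + 1 / Gamma (1 - b) * (g p / dt powr b - g 0 / (real n * dt) powr b - b * W)"
    unfolding FIR_def W_def np by simp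
  have "L1op (acoef dt b) g n + b / Gamma (1 - b) * (\<Sum>i<n - 1. IKval dt b g n i - (\<Sum>j = 1..Nexp. w j * IE dt (s j) n g i))
      = acoef dt b 0 * (g n - g p) + SL + (b * (\<Sum>i<p. IKval dt b g n i)) / Gamma (1 - b) - b / Gamma (1 - b) * W'"
    unfolding L unfolding W'_def np sum_subtractf by (simp add: algebra_simps)
  also have "\<dots> = acoef dt b 0 * (g n - g p) + SL + (dt powr (-b) * g p - (real n * dt) powr (-b) * g 0 - Gamma (1 - b) * SL) / Gamma (1 - b) - b / Gamma (1 - b) * W"
    unfolding T WW ..
  also have "\<dots> = FIR dt b Nexp w s g n"
    unfolding FIRe a0 powr_minus_divide using ne1 by (simp add: field_simps)
  finally show ?thesis ..
qed




lemma sum1n: "(\<Sum>k=1..n. f k) = (\<Sum>k<n. f (Suc k))"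
  using sum.atLeast1_atMost_eq[of f n] by simp

lemma point_energy:
  fixes w s :: "nat \<Rightarrow> real" and Nexp :: nat and g :: "nat \<Rightarrow> real"
  assumes dt: "dt > 0" and b: "0 < b" "b < 1" and spos: "\<And>j. j \<in> {1..Nexp} \<Longrightarrow> s j > 0"
    and n: "n \<ge> 1" and nT: "real n * dt \<le> T"
    and soe: "\<And>t. t \<in> {dt..T} \<Longrightarrow> \<bar>t powr (-1 - b) - (\<Sum>j = 1..Nexp. w j * exp (- s j * t))\<bar> \<le> \<epsilon>"
    and mpos: "(real n * dt) powr (-b) - 2 * b * \<epsilon> * ((real n - 1) * dt) > 0"
  shows "dt * (\<Sum>k=1..n. g k * FIR dt b Nexp w s g k)
     \<ge> ((real n * dt) powr (-b) - 2 * b * \<epsilon> * ((real n - 1) * dt)) / Gamma (1 - b) / 2 * dt * (\<Sum>k=1..n. (g k)^2)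
       - ((real n * dt) powr (1 - b) - b * (1 - b) * \<epsilon> * ((real n - 1) * dt) * dt) / Gamma (2 - b) * (g 0)^2"
proof -
  define a where "a = acoef dt b"
  define G where "G i = (g i)^2" for i
  define A where "A = (\<Sum>k=1..n. G k)"
  define Z where "Z = (\<Sum>i<n-1. G i + G (Suc i))"
  define X where "X k = (\<Sum>i<k-1. \<bar>g k\<bar> * (\<bar>g i\<bar> + \<bar>g (Suc i)\<bar>) / 2)" for k
  have G1: "Gamma (1 - b) > 0" using b by simp
  have G2: "Gamma (2 - b) = (1 - b) * Gamma (1 - b)" using Gamma2 b by simp
  have Gne: "Gamma (1 - b) \<noteq> 0" using G1 by (metis less_irrefl)
  have dtT: "dt \<le> T" using nT n dt
    by (smt (verit, best) mult_le_cancel_right1 of_nat_1 of_nat_mono)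
  have eps: "\<epsilon> \<ge> 0" using soe[of dt] dtT dt by (smt (verit) atLeastAtMost_iff)
  define c where "c = b * \<epsilon> / Gamma (1 - b)"
  have c0: "c \<ge> 0" unfolding c_def using b eps G1 by simp
  have Gnn: "G i \<ge> 0" for i unfolding G_def by simp
  have pt: "g k * FIR dt b Nexp w s g k \<ge> L1op a G k / 2 - c * dt * X k" if k: "k \<in> {1..n}" for k
  proof -
    define ES where "ES = (\<Sum>i<k - 1. IKval dt b g k i - (\<Sum>j = 1..Nexp. w j * IE dt (s j) k g i))"
    have dec: "FIR dt b Nexp w s g k = L1op a g k + b / Gamma (1 - b) * ES"
      unfolding a_def ES_def using FIR_decomp[OF dt b spos] k by auto
    have kT: "real k * dt \<le> T" using k nT dt by (smt (verit) atLeastAtMost_iff mult_right_mono of_nat_mono)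
    have "\<bar>ES\<bar> \<le> (\<Sum>i<k - 1. \<epsilon> * dt * (\<bar>g i\<bar> + \<bar>g (Suc i)\<bar>) / 2)"
      unfolding ES_def
      by (rule order_trans[OF sum_abs sum_mono]) (rule err_interval[OF dt b _ kT soe], auto)
    then have e1: "\<bar>g k\<bar> * \<bar>ES\<bar> \<le> \<bar>g k\<bar> * (\<Sum>i<k - 1. \<epsilon> * dt * (\<bar>g i\<bar> + \<bar>g (Suc i)\<bar>) / 2)"
      by (rule mult_left_mono) auto
    have e2: "\<bar>g k\<bar> * (\<Sum>i<k - 1. \<epsilon> * dt * (\<bar>g i\<bar> + \<bar>g (Suc i)\<bar>) / 2) = \<epsilon> * dt * X k"
      unfolding X_def sum_distrib_left by (rule sum.cong) (auto simp: algebra_simps)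
    have e3: "\<bar>g k\<bar> * \<bar>ES\<bar> \<le> \<epsilon> * dt * X k" using e1 e2 by simp

    have L1p: "2 * g k * L1op a g k \<ge> L1op a G k"
      unfolding G_def a_def by (rule L1_pos) (auto intro: acoef_nonneg[OF dt b] acoef_dec[OF dt b])
    have bG: "b / Gamma (1 - b) \<ge> 0" using b G1 by simp
    have "g k * (b / Gamma (1 - b) * ES) \<ge> - (b / Gamma (1 - b) * (\<bar>g k\<bar> * \<bar>ES\<bar>))"
    proof -
      have "\<bar>g k * (b / Gamma (1 - b) * ES)\<bar> = b / Gamma (1 - b) * (\<bar>g k\<bar> * \<bar>ES\<bar>)"
        using b G1 by (simp add: abs_mult)
      moreover have "- \<bar>g k * (b / Gamma (1 - b) * ES)\<bar> \<le> g k * (b / Gamma (1 - b) * ES)" using abs_ge_minus_self[of "g k * (b / Gamma (1 - b) * ES)"] by linarith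
      ultimately show ?thesis by simp
    qed
    moreover have "b / Gamma (1 - b) * (\<bar>g k\<bar> * \<bar>ES\<bar>) \<le> b / Gamma (1 - b) * (\<epsilon> * dt * X k)"
      using e3 bG by (rule mult_left_mono)
    moreover have "b / Gamma (1 - b) * (\<epsilon> * dt * X k) = c * dt * X k" unfolding c_def by simp
    ultimately show ?thesis unfolding dec using L1p by (simp add: algebra_simps)
  qed
  define tn where "tn = real n * dt"
  define tn1 where "tn1 = (real n - 1) * dt"
  have tn: "tn > 0" unfolding tn_def using n dt by simp
  have tn1: "tn1 \<ge> 0" unfolding tn1_def using n dt by simp
  have Ann: "A \<ge> 0" unfolding A_def using Gnn by (simp add: sum_nonneg)
  have S1: "dt * (\<Sum>k=1..n. g k * FIR dt b Nexp w s g k) \<ge> dt / 2 * (\<Sum>k=1..n. L1op a G k) - c * dt * dt * (\<Sum>k=1..n. X k)"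
  proof -
    have "(\<Sum>k=1..n. g k * FIR dt b Nexp w s g k) \<ge> (\<Sum>k=1..n. L1op a G k / 2 - c * dt * X k)"
      by (rule sum_mono) (rule pt)
    then have "dt * (\<Sum>k=1..n. g k * FIR dt b Nexp w s g k) \<ge> dt * (\<Sum>k=1..n. L1op a G k / 2 - c * dt * X k)"
      using dt by (simp add: mult_left_mono)
    also have "dt * (\<Sum>k=1..n. L1op a G k / 2 - c * dt * X k) = dt / 2 * (\<Sum>k=1..n. L1op a G k) - c * dt * dt * (\<Sum>k=1..n. X k)"
      by (simp add: sum_subtractf sum_distrib_left sum_divide_distrib algebra_simps)
    finally show ?thesis .
  qed
  have S2: "(\<Sum>k=1..n. L1op a G k) = (\<Sum>i<n. a (n - 1 - i) * G (Suc i)) - (\<Sum>l<n. a l) * G 0"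
    by (rule sum_L1)
  have S3: "dt * (\<Sum>i<n. a (n - 1 - i) * G (Suc i)) \<ge> dt * tn powr (-b) / Gamma (1 - b) * A"
  proof -
    have "dt * (\<Sum>i<n. a (n - 1 - i) * G (Suc i)) = (\<Sum>i<n. (dt * a (n - 1 - i)) * G (Suc i))"
      by (simp add: sum_distrib_left algebra_simps)
    also have "\<dots> \<ge> (\<Sum>i<n. (dt * tn powr (-b) / Gamma (1 - b)) * G (Suc i))"
    proof (rule sum_mono)
      fix i assume "i \<in> {..<n}"
      then have "n - 1 - i < n" using n by simp
      then have "dt * a (n - 1 - i) \<ge> dt * tn powr (-b) / Gamma (1 - b)"
        unfolding a_def tn_def by (rule acoef_lower[OF dt b])
      then show "(dt * tn powr (-b) / Gamma (1 - b)) * G (Suc i) \<le> (dt * a (n - 1 - i)) * G (Suc i)"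
        using Gnn by (rule mult_right_mono)
    qed
    also have "(\<Sum>i<n. (dt * tn powr (-b) / Gamma (1 - b)) * G (Suc i)) = dt * tn powr (-b) / Gamma (1 - b) * A"
      unfolding A_def sum1n by (simp add: sum_distrib_left)
    finally show ?thesis .
  qed
  have S4: "dt * (\<Sum>l<n. a l) = tn powr (1 - b) / Gamma (2 - b)"
  proof -
    have dtp: "dt powr (1 - b) = dt * dt powr (-b)"
    proof -
      have "dt powr (1 - b) = dt powr (1 + (-b))" by simp
      also have "\<dots> = dt powr 1 * dt powr (-b)" by (rule powr_add)
      finally show ?thesis using dt by simp
    qed
    show ?thesis unfolding a_def acoef_sum[OF dt b] tn_def powr_mult dtp by simp
  qed
  have S5: "(\<Sum>k=1..n. X k) \<le> (real n - 1) * (A + G 0 / 4)"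
  proof -
    obtain m where nm: "n = Suc m" using n by (cases n) auto
    have ab: "\<bar>x\<bar> * (\<bar>y\<bar> + \<bar>z\<bar>) / 2 \<le> x^2 / 2 + (y^2 + z^2) / 4" for x y z :: real
    proof -
      have h: "0 \<le> (\<bar>x\<bar> - \<bar>y\<bar>)^2 + (\<bar>x\<bar> - \<bar>z\<bar>)^2" by simp
      have e: "(\<bar>x\<bar> - \<bar>y\<bar>)^2 + (\<bar>x\<bar> - \<bar>z\<bar>)^2 = 2 * x^2 + y^2 + z^2 - 2 * (\<bar>x\<bar> * \<bar>y\<bar>) - 2 * (\<bar>x\<bar> * \<bar>z\<bar>)"
        by (simp add: power2_diff algebra_simps)
      have e2: "\<bar>x\<bar> * (\<bar>y\<bar> + \<bar>z\<bar>) / 2 = (\<bar>x\<bar> * \<bar>y\<bar>) / 2 + (\<bar>x\<bar> * \<bar>z\<bar>) / 2" by (simp add: algebra_simps)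
      show ?thesis unfolding e2 using h e by argo
    qed
    have Zb: "(\<Sum>i<k - 1. G i + G (Suc i)) \<le> Z" if "k \<le> n" for k
      unfolding Z_def using that Gnn by (intro sum_mono2) (auto intro: add_nonneg_nonneg)
    have Xb: "X k \<le> (real n - 1) * G k / 2 + Z / 4" if k: "1 \<le> k" "k \<le> n" for k
    proof -
      have "X k \<le> (\<Sum>i<k - 1. G k / 2 + (G i + G (Suc i)) / 4)"
        unfolding X_def G_def by (intro sum_mono ab)
      also have "\<dots> = real (k - 1) * G k / 2 + (\<Sum>i<k - 1. G i + G (Suc i)) / 4"
      proof -
        have "(\<Sum>i<k - 1. G k / 2 + (G i + G (Suc i)) / 4) = (\<Sum>i<k - 1. G k / 2) + (\<Sum>i<k - 1. G i + G (Suc i)) / 4"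
          by (simp only: sum.distrib[of "\<lambda>i. G k / 2" "\<lambda>i. (G i + G (Suc i)) / 4"] sum_divide_distrib[of "\<lambda>i. G i + G (Suc i)" "{..<k-1}" 4])
        then show ?thesis by simp
      qed
      also have "\<dots> \<le> (real n - 1) * G k / 2 + Z / 4"
      proof -
        have "real (k - 1) \<le> real n - 1" using k by (simp add: of_nat_diff)
        then have "real (k - 1) * G k \<le> (real n - 1) * G k" using Gnn by (rule mult_right_mono)
        then show ?thesis using Zb[OF k(2)] by linarith
      qed
      finally show ?thesis .
    qed
    have X1: "X 1 = 0" unfolding X_def by simp
    have "(\<Sum>k=1..n. X k) = (\<Sum>k<Suc m. X (Suc k))" unfolding sum1n nm ..
    also have "\<dots> = X 1 + (\<Sum>k<m. X (Suc (Suc k)))" by (subst sum.lessThan_Suc_shift) simp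
    also have "\<dots> \<le> 0 + (\<Sum>k<m. (real n - 1) * G (Suc (Suc k)) / 2 + Z / 4)"
      unfolding X1 using nm by (intro add_mono sum_mono Xb) auto
    also have "\<dots> = (real n - 1) / 2 * (\<Sum>k<m. G (Suc (Suc k))) + real m * Z / 4"
      by (simp add: sum.distrib sum_distrib_left)
    also have "\<dots> \<le> (real n - 1) / 2 * A + (real n - 1) * (G 0 + 2 * A) / 4"
    proof -
      have A2: "A = G 1 + (\<Sum>k<m. G (Suc (Suc k)))"
        unfolding A_def sum1n nm by (subst sum.lessThan_Suc_shift) simp
      have "(\<Sum>k<m. G (Suc (Suc k))) \<le> A" using A2 Gnn[of 1] by linarith
      then have t1: "(real n - 1) / 2 * (\<Sum>k<m. G (Suc (Suc k))) \<le> (real n - 1) / 2 * A"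
        using n by (intro mult_left_mono) auto
      have Z2: "Z = (\<Sum>i<m. G i) + (\<Sum>i<m. G (Suc i))" unfolding Z_def nm by (simp add: sum.distrib)
      have s1: "(\<Sum>i<m. G (Suc i)) \<le> A"
      proof -
        have "A = (\<Sum>i<Suc m. G (Suc i))" unfolding A_def sum1n nm ..
        also have "\<dots> = (\<Sum>i<m. G (Suc i)) + G (Suc m)" by simp
        finally show ?thesis using Gnn[of "Suc m"] by linarith
      qed
      have s0: "(\<Sum>i<m. G i) \<le> G 0 + A"
      proof -
        have "(\<Sum>i<m. G i) \<le> (\<Sum>i<Suc m. G i)" using Gnn by simp
        also have "\<dots> = G 0 + (\<Sum>i<m. G (Suc i))" by (subst sum.lessThan_Suc_shift) simp
        finally show ?thesis using s1 by linarith
      qed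
      have "Z \<le> G 0 + 2 * A" using Z2 s0 s1 by linarith
      then have t2: "real m * Z / 4 \<le> (real n - 1) * (G 0 + 2 * A) / 4"
        using nm by (simp add: divide_right_mono mult_left_mono)
      show ?thesis using t1 t2 by linarith
    qed
    also have "\<dots> = (real n - 1) * (A + G 0 / 4)" by (simp add: field_simps)
    finally show ?thesis .
  qed
  have tnp: "tn powr (1 - b) = tn * tn powr (-b)"
  proof -
    have "tn powr (1 - b) = tn powr (1 + (-b))" by simp
    also have "\<dots> = tn powr 1 * tn powr (-b)" by (rule powr_add)
    finally show ?thesis using tn by simp
  qed
  have key: "tn powr (1 - b) / 2 \<ge> 5 / 4 * b * (1 - b) * \<epsilon> * tn1 * dt"
  proof -
    have m: "tn powr (-b) > 2 * b * \<epsilon> * tn1" using mpos unfolding tn_def tn1_def by simp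
    have "tn powr (1 - b) / 2 \<ge> tn * (b * \<epsilon> * tn1)"
    proof -
      have "tn * (2 * b * \<epsilon> * tn1) \<le> tn * tn powr (-b)" using m tn by (intro mult_left_mono) auto
      moreover have "tn * (2 * b * \<epsilon> * tn1) = 2 * (tn * (b * \<epsilon> * tn1))" by (simp add: algebra_simps)
      ultimately show ?thesis unfolding tnp by linarith
    qed
    moreover have "tn * (b * \<epsilon> * tn1) \<ge> 5 / 4 * b * (1 - b) * \<epsilon> * tn1 * dt"
    proof (cases "n = 1")
      case True then show ?thesis unfolding tn1_def by simp
    next
      case False
      then have "real n \<ge> 2" using n by simp
      then have "5 / 4 * (1 - b) \<le> real n" using b by simp
      then have "tn \<ge> 5 / 4 * (1 - b) * dt" unfolding tn_def using dt
        by (intro mult_right_mono) auto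
      moreover have "b * \<epsilon> * tn1 \<ge> 0" using b eps tn1 by simp
      ultimately have "5 / 4 * (1 - b) * dt * (b * \<epsilon> * tn1) \<le> tn * (b * \<epsilon> * tn1)"
        by (rule mult_right_mono)
      moreover have "5 / 4 * b * (1 - b) * \<epsilon> * tn1 * dt = 5 / 4 * (1 - b) * dt * (b * \<epsilon> * tn1)"
        by (simp add: algebra_simps)
      ultimately show ?thesis by linarith
    qed
    ultimately show ?thesis by linarith
  qed
  have G0: "G 0 \<ge> 0" by (rule Gnn)
  have cdt: "c * dt * dt * (real n - 1) = b * \<epsilon> * tn1 / Gamma (1 - b) * dt"
    unfolding c_def tn1_def by (simp add: algebra_simps)
  have LHS: "dt * (\<Sum>k=1..n. g k * FIR dt b Nexp w s g k) \<ge>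
      dt * tn powr (-b) / Gamma (1 - b) * A / 2 - tn powr (1 - b) / Gamma (2 - b) * G 0 / 2
      - b * \<epsilon> * tn1 / Gamma (1 - b) * dt * (A + G 0 / 4)"
  proof -
    have "c * dt * dt * (\<Sum>k=1..n. X k) \<le> c * dt * dt * ((real n - 1) * (A + G 0 / 4))"
      using S5 c0 dt by (intro mult_left_mono) auto
    then have f1: "c * dt * dt * (\<Sum>k=1..n. X k) \<le> b * \<epsilon> * tn1 / Gamma (1 - b) * dt * (A + G 0 / 4)"
      using cdt by (simp add: mult.assoc[symmetric])
    have f2: "dt / 2 * (\<Sum>k=1..n. L1op a G k) = (dt * (\<Sum>i<n. a (n - 1 - i) * G (Suc i))) / 2 - tn powr (1 - b) / Gamma (2 - b) * G 0 / 2"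
      unfolding S2 S4[symmetric] by (simp add: algebra_simps)
    have gen: "\<And>C E L Q R F P :: real. C \<le> E \<Longrightarrow> L = Q / 2 - R / 2 \<Longrightarrow> L - C \<le> F \<Longrightarrow> P \<le> Q \<Longrightarrow> P / 2 - R / 2 - E \<le> F"
      by linarith
    show ?thesis by (rule gen[OF f1 f2 S1 S3])
  qed
  have fin: "dt * tn powr (-b) / Gamma (1 - b) * A / 2 - tn powr (1 - b) / Gamma (2 - b) * G 0 / 2
      - b * \<epsilon> * tn1 / Gamma (1 - b) * dt * (A + G 0 / 4)
      \<ge> (tn powr (-b) - 2 * b * \<epsilon> * tn1) / Gamma (1 - b) / 2 * dt * A
       - (tn powr (1 - b) - b * (1 - b) * \<epsilon> * tn1 * dt) / Gamma (2 - b) * G 0"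
  proof -
    have eqA: "dt * tn powr (-b) / Gamma (1 - b) * A / 2 - b * \<epsilon> * tn1 / Gamma (1 - b) * dt * A
        = (tn powr (-b) - 2 * b * \<epsilon> * tn1) / Gamma (1 - b) / 2 * dt * A"
      using Gne by (simp add: field_simps)
    have "tn powr (1 - b) / Gamma (2 - b) * G 0 / 2 + b * \<epsilon> * tn1 / Gamma (1 - b) * dt * (G 0 / 4)
        = (tn powr (1 - b) / 2 + b * (1 - b) * \<epsilon> * tn1 * dt / 4) / Gamma (2 - b) * G 0"
      unfolding G2 using b Gne by (simp add: field_simps)
    also have "\<dots> \<le> (tn powr (1 - b) - b * (1 - b) * \<epsilon> * tn1 * dt) / Gamma (2 - b) * G 0"
    proof -
      have kk: "tn powr (1 - b) / 2 + b * (1 - b) * \<epsilon> * tn1 * dt / 4 \<le> tn powr (1 - b) - b * (1 - b) * \<epsilon> * tn1 * dt"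
        using key by linarith
      have "Gamma (2 - b) > 0" using b by simp
      then show ?thesis using kk G0 by (intro mult_right_mono divide_right_mono) auto
    qed
    finally have calc: "tn powr (1 - b) / Gamma (2 - b) * G 0 / 2 + b * \<epsilon> * tn1 / Gamma (1 - b) * dt * (G 0 / 4)
      \<le> (tn powr (1 - b) - b * (1 - b) * \<epsilon> * tn1 * dt) / Gamma (2 - b) * G 0" .
    have dis: "b * \<epsilon> * tn1 / Gamma (1 - b) * dt * (A + G 0 / 4) = b * \<epsilon> * tn1 / Gamma (1 - b) * dt * A + b * \<epsilon> * tn1 / Gamma (1 - b) * dt * (G 0 / 4)"
      by (simp only: distrib_left)
    have gen: "\<And>X1 Y1 T1 R Y2 T2 W :: real. X1 - Y1 = T1 \<Longrightarrow> R + Y2 \<le> T2 \<Longrightarrow> W = Y1 + Y2 \<Longrightarrow> X1 - R - W \<ge> T1 - T2"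
      by linarith
    show ?thesis by (rule gen[OF eqA calc dis])
  qed
  show ?thesis using LHS fin unfolding A_def G_def tn_def tn1_def by linarith
qed




lemma sbp_gen:
  fixes v d :: "nat \<Rightarrow> real"
  shows "(\<Sum>i=1..M. v i * (d i - d (i - 1))) + v 0 * d 0 - v (Suc M) * d M
     = - (\<Sum>m\<le>M. (v (Suc m) - v m) * d m)"
  by (induction M) (auto simp: algebra_simps)

lemma sbp:
  fixes v :: "nat \<Rightarrow> real"
  assumes h: "h > 0" and N: "N \<ge> 1"
  shows "(\<Sum>i=1..N-1. h * v i * dxx h v i) + v 0 * dx h v 0 - v N * dx h v (N - 1)
     = - (h * (\<Sum>m<N. (dx h v m)^2))"
proof -
  obtain M where NM: "N = Suc M" using N by (cases N) auto
  have "(\<Sum>i=1..N-1. h * v i * dxx h v i) = (\<Sum>i=1..M. v i * (dx h v i - dx h v (i - 1)))"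
    unfolding NM dxx_def using h by (intro sum.cong) auto
  moreover have "(\<Sum>m\<le>M. (v (Suc m) - v m) * dx h v m) = h * (\<Sum>m<N. (dx h v m)^2)"
    unfolding NM sum_distrib_left lessThan_Suc_atMost using h
    by (intro sum.cong) (auto simp: dx_def power2_eq_square)
  ultimately show ?thesis using sbp_gen[of v "dx h v" M] unfolding NM by simp
qed

lemma telesc_abs:
  fixes v :: "nat \<Rightarrow> real"
  assumes "i \<le> N" "j \<le> N"
  shows "v i - v j \<le> (\<Sum>m<N. \<bar>v (Suc m) - v m\<bar>)"
proof -
  have tel: "v q - v p = (\<Sum>m\<in>{p..<q}. v (Suc m) - v m)" if "p \<le> q" for p q
    using that by (induction q) (auto simp: atLeastLessThanSuc le_Suc_eq)
  have sub: "(\<Sum>m\<in>{p..<q}. \<bar>v (Suc m) - v m\<bar>) \<le> (\<Sum>m<N. \<bar>v (Suc m) - v m\<bar>)" if "q \<le> N" for p q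
    using that by (intro sum_mono2) auto
  show ?thesis
  proof (cases "j \<le> i")
    case True
    have "v i - v j \<le> (\<Sum>m\<in>{j..<i}. \<bar>v (Suc m) - v m\<bar>)"
      unfolding tel[OF True] by (rule order_trans[OF abs_ge_self sum_abs])
    then show ?thesis using sub[of i j, OF assms(1)] by linarith
  next
    case False
    then have ij: "i \<le> j" by simp
    have "v i - v j = - (\<Sum>m\<in>{i..<j}. v (Suc m) - v m)" using tel[OF ij] by simp
    also have "\<dots> \<le> (\<Sum>m\<in>{i..<j}. \<bar>v (Suc m) - v m\<bar>)"
      by (rule order_trans[OF abs_ge_minus_self sum_abs])
    finally show ?thesis using sub[of j i, OF assms(2)] by linarith
  qed
qed

lemma gnorm2_alt:
  fixes v :: "nat \<Rightarrow> real"
  assumes N: "N \<ge> 1"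
  shows "h * (\<Sum>m<N. (v (Suc m))^2 + (v m)^2) = 2 * gnorm2 h N v"
proof -
  obtain M where NM: "N = Suc M" using N by (cases N) auto
  have a: "(\<Sum>m<N. (v m)^2) = (v 0)^2 + (\<Sum>i=1..N-1. (v i)^2)"
    unfolding NM sum1n by (subst sum.lessThan_Suc_shift) simp
  have b: "(\<Sum>m<N. (v (Suc m))^2) = (\<Sum>i=1..N-1. (v i)^2) + (v N)^2"
    unfolding NM sum1n by simp
  show ?thesis unfolding gnorm2_def sum.distrib a b by (simp add: algebra_simps)
qed

lemma sobolev:
  fixes v :: "nat \<Rightarrow> real"
  assumes h: "h > 0" and N: "N \<ge> 1" and eta: "\<eta> > 0"
  shows "(gnorm_inf N v)^2 \<le> gnorm2 h N v / (h * real N) + gnorm2 h N v / \<eta> + \<eta> * (h * (\<Sum>m<N. (dx h v m)^2))"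
proof -
  define D where "D = h * (\<Sum>m<N. (dx h v m)^2)"
  define C where "C = \<eta> * D + gnorm2 h N v / \<eta>"
  have step: "(v m)^2 - (v m')^2 \<le> C" if "m \<le> N" "m' \<le> N" for m m'
  proof -
    have "(v m)^2 - (v m')^2 \<le> (\<Sum>q<N. \<bar>(v (Suc q))^2 - (v q)^2\<bar>)"
      using telesc_abs[OF that, of "\<lambda>q. (v q)^2"] by simp
    also have "\<dots> \<le> (\<Sum>q<N. h * (\<eta> * (dx h v q)^2 + ((v (Suc q))^2 + (v q)^2) / (2 * \<eta>)))"
    proof (rule sum_mono)
      fix q
      have e: "(v (Suc q))^2 - (v q)^2 = h * dx h v q * (v (Suc q) + v q)"
        unfolding dx_def using h by (simp add: power2_eq_square field_simps)
      have y: "\<bar>x * y\<bar> \<le> \<eta> * x^2 + y^2 / (4 * \<eta>)" for x y :: real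
      proof -
        have "0 \<le> (2 * \<eta> * \<bar>x\<bar> - \<bar>y\<bar>)^2" by simp
        then have "4 * \<eta> * \<bar>x * y\<bar> \<le> 4 * \<eta>^2 * x^2 + y^2"
          by (simp add: power2_eq_square algebra_simps abs_mult)
        then show ?thesis using eta by (simp add: field_simps power2_eq_square)
      qed
      have y2: "(v (Suc q) + v q)^2 \<le> 2 * ((v (Suc q))^2 + (v q)^2)"
        using power2_sum[of "v (Suc q)" "v q"] power2_diff[of "v (Suc q)" "v q"] zero_le_power2[of "v (Suc q) - v q"] by argo
      have "\<bar>(v (Suc q))^2 - (v q)^2\<bar> = h * \<bar>dx h v q * (v (Suc q) + v q)\<bar>"
        unfolding e using h by (simp add: abs_mult)
      also have "\<dots> \<le> h * (\<eta> * (dx h v q)^2 + (v (Suc q) + v q)^2 / (4 * \<eta>))"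
        using h y by (intro mult_left_mono) auto
      also have "\<dots> \<le> h * (\<eta> * (dx h v q)^2 + ((v (Suc q))^2 + (v q)^2) / (2 * \<eta>))"
        using h eta y2 by (intro mult_left_mono add_left_mono) (auto simp: field_simps)
      finally show "\<bar>(v (Suc q))^2 - (v q)^2\<bar> \<le> h * (\<eta> * (dx h v q)^2 + ((v (Suc q))^2 + (v q)^2) / (2 * \<eta>))" .
    qed
    also have "\<dots> = (\<Sum>q<N. \<eta> * (h * (dx h v q)^2) + (h * ((v (Suc q))^2 + (v q)^2)) / (2 * \<eta>))"
      by (rule sum.cong) (auto simp: algebra_simps)
    also have "\<dots> = \<eta> * (\<Sum>q<N. h * (dx h v q)^2) + (\<Sum>q<N. h * ((v (Suc q))^2 + (v q)^2)) / (2 * \<eta>)"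
      by (simp only: sum.distrib sum_distrib_left sum_divide_distrib)
    also have "\<dots> = \<eta> * D + (h * (\<Sum>q<N. (v (Suc q))^2 + (v q)^2)) / (2 * \<eta>)"
      unfolding D_def by (simp only: sum_distrib_left)
    also have "\<dots> = C" unfolding gnorm2_alt[OF N] C_def using eta by simp
    finally show ?thesis .
  qed
  have pt: "(v i)^2 \<le> gnorm2 h N v / (h * real N) + C" if i: "i \<le> N" for i
  proof -
    have "h * real N * (v i)^2 \<le> gnorm2 h N v + h * real N * C"
    proof -
      obtain M where NM: "N = Suc M" using N by (cases N) auto
      have s1: "(\<Sum>j=1..N-1. (v i)^2) \<le> (\<Sum>j=1..N-1. (v j)^2 + C)"
        by (rule sum_mono) (use step i in \<open>auto simp: algebra_simps\<close>)
      have a: "(v i)^2 \<le> (v 0)^2 + C" "(v i)^2 \<le> (v N)^2 + C" using step[OF i] by fastforce+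
      have "h * real N * (v i)^2 = h * ((v i)^2 / 2 + (\<Sum>j=1..N-1. (v i)^2) + (v i)^2 / 2)"
        unfolding NM by (simp add: algebra_simps)
      also have "\<dots> \<le> h * (((v 0)^2 + C) / 2 + (\<Sum>j=1..N-1. (v j)^2 + C) + ((v N)^2 + C) / 2)"
        apply (rule mult_left_mono) using h s1 a by argo+
      also have "\<dots> = gnorm2 h N v + h * real N * C"
        unfolding gnorm2_def sum.distrib NM by (simp add: algebra_simps add_divide_distrib)
      finally show ?thesis .
    qed
    then show ?thesis using h N by (simp add: field_simps)
  qed
  have fin: "finite ((\<lambda>i. \<bar>v i\<bar>) ` {0..N})" "(\<lambda>i. \<bar>v i\<bar>) ` {0..N} \<noteq> {}" by auto
  have "gnorm_inf N v \<in> (\<lambda>i. \<bar>v i\<bar>) ` {0..N}"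
    using Max_in[OF fin] unfolding gnorm_inf_def .
  then obtain i where i: "i \<in> {0..N}" "gnorm_inf N v = \<bar>v i\<bar>" by auto
  have "(gnorm_inf N v)^2 = (v i)^2" using i by simp
  also have "\<dots> \<le> gnorm2 h N v / (h * real N) + C" using pt i by auto
  finally show ?thesis unfolding C_def D_def by simp
qed




lemma young1: fixes x y m :: real assumes m: "m > 0" shows "x * y \<le> m / 4 * x^2 + y^2 / m"
proof -
  have "0 \<le> (m * x - 2 * y)^2" by simp
  then have h1: "4 * m * (x * y) \<le> m^2 * x^2 + 4 * y^2" by (simp add: power2_eq_square algebra_simps)
  then have "x * y \<le> (m^2 * x^2 + 4 * y^2) / (4 * m)" using m by (simp add: le_divide_eq algebra_simps)
  also have "\<dots> = m / 4 * x^2 + y^2 / m" using m by (simp add: field_simps power2_eq_square)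
  finally show ?thesis .
qed
lemma young2: fixes x y h v :: real assumes v: "v > 0" shows "h / 2 * (x * y) \<le> v / 2 * x^2 + (h * y)^2 / (8 * v)"
proof -
  have "0 \<le> (2 * v * x - h * y)^2" by simp
  then have h1: "4 * v * (h * (x * y)) \<le> 4 * v^2 * x^2 + (h * y)^2" by (simp add: power2_eq_square algebra_simps)
  then have "h / 2 * (x * y) \<le> (4 * v^2 * x^2 + (h * y)^2) / (8 * v)" using v by (simp add: le_divide_eq algebra_simps)
  also have "\<dots> = v / 2 * x^2 + (h * y)^2 / (8 * v)" using v by (simp add: field_simps power2_eq_square)
  finally show ?thesis .
qed
lemma eta_id: fixes L m :: real assumes L: "L > 0" and m: "m > 0"
  shows "1 / L + 1 / (2 * (1 + sqrt (1 + L^2 * m)) / (L * m)) = 2 * (1 + sqrt (1 + L^2 * m)) / (L * m) * m / 4"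
    "2 * (1 + sqrt (1 + L^2 * m)) / (L * m) > 0"
proof -
  define S where "S = sqrt (1 + L^2 * m)"
  have S2: "S^2 = 1 + L^2 * m" unfolding S_def using L m by simp
  have Sp: "S \<ge> 1" unfolding S_def using L m by simp
  show "2 * (1 + sqrt (1 + L^2 * m)) / (L * m) > 0" unfolding S_def[symmetric] using Sp L m by simp
  have a: "2 * (1 + S) / (L * m) * m / 4 = (1 + S) / (2 * L)" using L m by (simp add: field_simps)
  have b: "1 / (2 * (1 + S) / (L * m)) = L * m / (2 * (1 + S))" using L m Sp by (simp add: field_simps)
  have c0: "(S - 1) * (1 + S) = L^2 * m" using S2 by (simp add: algebra_simps power2_eq_square)
  have c: "(1 + S) / (2 * L) - 1 / L = L * m / (2 * (1 + S))"
  proof -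
    have "(1 + S) / (2 * L) - 1 / L = (S - 1) / (2 * L)" using L by (simp add: field_simps)
    also have "\<dots> = L * m / (2 * (1 + S))" using L Sp c0 by (simp add: field_simps power2_eq_square)
    finally show ?thesis .
  qed
  show "1 / L + 1 / (2 * (1 + sqrt (1 + L^2 * m)) / (L * m)) = 2 * (1 + sqrt (1 + L^2 * m)) / (L * m) * m / 4"
    unfolding S_def[symmetric] a b using c by simp
qed

theorem theorem4:
  fixes \<alpha> x\<^sub>l x\<^sub>r T \<epsilon> :: real
    and N\<^sub>T N\<^sub>S Nexp :: nat
    and wA sA wH sH :: "nat \<Rightarrow> real"
    and u f :: "nat \<Rightarrow> nat \<Rightarrow> real"
    and n :: nat
  defines "L \<equiv> x\<^sub>r - x\<^sub>l"
    and "dt \<equiv> T / real N\<^sub>T"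
    and "h \<equiv> (x\<^sub>r - x\<^sub>l) / real N\<^sub>S"
  assumes "0 < \<alpha>" "\<alpha> < 1" "x\<^sub>l < x\<^sub>r" "T > 0" "N\<^sub>T > 0" "N\<^sub>S > 0"
    and SOE_alpha: "SOE_approx \<alpha> dt T \<epsilon> Nexp wA sA"
    and SOE_half: "SOE_approx (\<alpha>/2) dt T \<epsilon> Nexp wH sH"
    and interior: "\<And>i k. 1 \<le> i \<Longrightarrow> i \<le> N\<^sub>S - 1 \<Longrightarrow> 1 \<le> k \<Longrightarrow> k \<le> N\<^sub>T \<Longrightarrow>
        FIR dt \<alpha> Nexp wA sA (\<lambda>m. u i m) k = dxx h (\<lambda>j. u j k) i + f i k"
    and left: "\<And>k. 1 \<le> k \<Longrightarrow> k \<le> N\<^sub>T \<Longrightarrow>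
        FIR dt \<alpha> Nexp wA sA (\<lambda>m. u 0 m) k
          = 2 / h * (dx h (\<lambda>j. u j k) 0 - FIR dt (\<alpha>/2) Nexp wH sH (\<lambda>m. u 0 m) k) + f 0 k"
    and right: "\<And>k. 1 \<le> k \<Longrightarrow> k \<le> N\<^sub>T \<Longrightarrow>
        FIR dt \<alpha> Nexp wA sA (\<lambda>m. u N\<^sub>S m) k
          = 2 / h * (- dx h (\<lambda>j. u j k) (N\<^sub>S - 1) - FIR dt (\<alpha>/2) Nexp wH sH (\<lambda>m. u N\<^sub>S m) k)
            + f N\<^sub>S k"
    and n: "1 \<le> n" "n \<le> N\<^sub>T"
    and mu_pos: "(real n * dt) powr (-\<alpha>) - 2 * \<alpha> * \<epsilon> * ((real n - 1) * dt) > 0"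
    and nu_pos: "(real n * dt) powr (-\<alpha>/2) - \<alpha> * \<epsilon> * ((real n - 1) * dt) > 0"
  shows
   "let tn = real n * dt; tn1 = (real n - 1) * dt;
        \<rho> = (tn powr (1 - \<alpha>) - \<alpha> * (1 - \<alpha>) * \<epsilon> * tn1 * dt) / Gamma (2 - \<alpha>);
        \<mu> = (tn powr (-\<alpha>) - 2 * \<alpha> * \<epsilon> * tn1) / Gamma (1 - \<alpha>);
        \<rho>\<^sub>h = (tn powr (1 - \<alpha>/2) - (\<alpha>/2) * (1 - \<alpha>/2) * \<epsilon> * tn1 * dt) / Gamma (2 - \<alpha>/2);
        \<nu> = (tn powr (-\<alpha>/2) - \<alpha> * \<epsilon> * tn1) / Gamma (1 - \<alpha>/2)
    in dt * (\<Sum>k = 1..n. (gnorm_inf N\<^sub>S (\<lambda>i. u i k))^2)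
       \<le> 2 * (1 + sqrt (1 + L^2 * \<mu>)) / (L * \<mu>) *
          (\<rho> * gnorm2 h N\<^sub>S (\<lambda>i. u i 0)
           + \<rho>\<^sub>h * ((u 0 0)^2 + (u N\<^sub>S 0)^2)
           + dt / (8 * \<nu>) * (\<Sum>k = 1..n. (h * f 0 k)^2 + (h * f N\<^sub>S k)^2)
           + dt / \<mu> * (\<Sum>k = 1..n. h * (\<Sum>i = 1..N\<^sub>S - 1. (f i k)^2)))"
proof -
  define tn where "tn = real n * dt"
  define tn1 where "tn1 = (real n - 1) * dt"
  define \<rho> where "\<rho> = (tn powr (1 - \<alpha>) - \<alpha> * (1 - \<alpha>) * \<epsilon> * tn1 * dt) / Gamma (2 - \<alpha>)"
  define \<mu> where "\<mu> = (tn powr (-\<alpha>) - 2 * \<alpha> * \<epsilon> * tn1) / Gamma (1 - \<alpha>)"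
  define \<rho>h where "\<rho>h = (tn powr (1 - \<alpha>/2) - (\<alpha>/2) * (1 - \<alpha>/2) * \<epsilon> * tn1 * dt) / Gamma (2 - \<alpha>/2)"
  define \<nu> where "\<nu> = (tn powr (-\<alpha>/2) - \<alpha> * \<epsilon> * tn1) / Gamma (1 - \<alpha>/2)"
  define N where "N = N\<^sub>S"
  have dt: "dt > 0" unfolding dt_def using \<open>T > 0\<close> \<open>N\<^sub>T > 0\<close> by simp
  have h: "h > 0" unfolding h_def using \<open>x\<^sub>l < x\<^sub>r\<close> \<open>N\<^sub>S > 0\<close> by simp
  have N1: "N \<ge> 1" unfolding N_def using \<open>N\<^sub>S > 0\<close> by simp
  have Lh: "L = h * real N" unfolding L_def h_def N_def using \<open>N\<^sub>S > 0\<close> by simp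
  have Lpos: "L > 0" unfolding L_def using \<open>x\<^sub>l < x\<^sub>r\<close> by simp
  have nT: "real n * dt \<le> T"
  proof -
    have "real n \<le> real N\<^sub>T" using n by simp
    then have "real n * dt \<le> real N\<^sub>T * dt" using dt by (intro mult_right_mono) auto
    also have "real N\<^sub>T * dt = T" unfolding dt_def using \<open>N\<^sub>T > 0\<close> by simp
    finally show ?thesis .
  qed
  have spA: "\<And>j. j \<in> {1..Nexp} \<Longrightarrow> sA j > 0" and soeA: "\<And>t. t \<in> {dt..T} \<Longrightarrow> \<bar>t powr (-1 - \<alpha>) - (\<Sum>j = 1..Nexp. wA j * exp (- sA j * t))\<bar> \<le> \<epsilon>"
    using SOE_alpha unfolding SOE_approx_def by auto
  have spH: "\<And>j. j \<in> {1..Nexp} \<Longrightarrow> sH j > 0" and soeH: "\<And>t. t \<in> {dt..T} \<Longrightarrow> \<bar>t powr (-1 - \<alpha>/2) - (\<Sum>j = 1..Nexp. wH j * exp (- sH j * t))\<bar> \<le> \<epsilon>"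
    using SOE_half unfolding SOE_approx_def by auto
  have a1: "0 < \<alpha>/2" "\<alpha>/2 < 1" using \<open>0 < \<alpha>\<close> \<open>\<alpha> < 1\<close> by auto
  have mu_pos': "\<mu> > 0" unfolding \<mu>_def tn_def tn1_def using mu_pos \<open>0 < \<alpha>\<close> \<open>\<alpha> < 1\<close> by simp
  have nu_pos': "\<nu> > 0" unfolding \<nu>_def tn_def tn1_def using nu_pos \<open>0 < \<alpha>\<close> \<open>\<alpha> < 1\<close> by simp
  define Fa where "Fa i k = FIR dt \<alpha> Nexp wA sA (\<lambda>m. u i m) k" for i k
  define Fh where "Fh i k = FIR dt (\<alpha>/2) Nexp wH sH (\<lambda>m. u i m) k" for i k
  have PEa: "dt * (\<Sum>k=1..n. u i k * Fa i k) \<ge> \<mu> / 2 * (dt * (\<Sum>k=1..n. (u i k)^2)) - \<rho> * (u i 0)^2" for i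
  proof -
    have "dt * (\<Sum>k=1..n. u i k * FIR dt \<alpha> Nexp wA sA (\<lambda>m. u i m) k)
     \<ge> ((real n * dt) powr (-\<alpha>) - 2 * \<alpha> * \<epsilon> * ((real n - 1) * dt)) / Gamma (1 - \<alpha>) / 2 * dt * (\<Sum>k=1..n. (u i k)^2)
       - ((real n * dt) powr (1 - \<alpha>) - \<alpha> * (1 - \<alpha>) * \<epsilon> * ((real n - 1) * dt) * dt) / Gamma (2 - \<alpha>) * (u i 0)^2"
      using point_energy[OF dt \<open>0 < \<alpha>\<close> \<open>\<alpha> < 1\<close> spA n(1) nT soeA mu_pos, of "\<lambda>m. u i m"] by simp
    then show ?thesis unfolding Fa_def \<mu>_def \<rho>_def tn_def tn1_def by (simp add: algebra_simps)
  qed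
  have PEh: "dt * (\<Sum>k=1..n. u i k * Fh i k) \<ge> \<nu> / 2 * (dt * (\<Sum>k=1..n. (u i k)^2)) - \<rho>h * (u i 0)^2" for i
  proof -
    have mp: "(real n * dt) powr (-(\<alpha>/2)) - 2 * (\<alpha>/2) * \<epsilon> * ((real n - 1) * dt) > 0" using nu_pos by simp
    have "dt * (\<Sum>k=1..n. u i k * FIR dt (\<alpha>/2) Nexp wH sH (\<lambda>m. u i m) k)
     \<ge> ((real n * dt) powr (-(\<alpha>/2)) - 2 * (\<alpha>/2) * \<epsilon> * ((real n - 1) * dt)) / Gamma (1 - \<alpha>/2) / 2 * dt * (\<Sum>k=1..n. (u i k)^2)
       - ((real n * dt) powr (1 - \<alpha>/2) - \<alpha>/2 * (1 - \<alpha>/2) * \<epsilon> * ((real n - 1) * dt) * dt) / Gamma (2 - \<alpha>/2) * (u i 0)^2"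
      by (rule point_energy[OF dt a1 spH n(1) nT soeH mp])
    then show ?thesis unfolding Fh_def \<nu>_def \<rho>h_def tn_def tn1_def by (simp add: algebra_simps)
  qed
  define W where "W \<phi> = h / 2 * \<phi> 0 + (\<Sum>i=1..N-1. h * \<phi> i) + h / 2 * \<phi> N" for \<phi> :: "nat \<Rightarrow> real"
  have W_sum: "W (\<lambda>i. \<Sum>k\<in>K. \<phi> k i) = (\<Sum>k\<in>K. W (\<phi> k))" for K :: "nat set" and \<phi>
    unfolding W_def sum_distrib_left sum.distrib by (simp add: sum.swap[of _ "{Suc 0..N - Suc 0}"])
  have W_lin: "W (\<lambda>i. a * \<phi> i - b * \<psi> i) = a * W \<phi> - b * W \<psi>" for a b \<phi> \<psi>
    unfolding W_def by (simp add: sum_subtractf sum_distrib_left algebra_simps)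
  have W_cmul: "W (\<lambda>i. a * \<phi> i) = a * W \<phi>" for a \<phi>
    unfolding W_def by (simp add: sum_distrib_left algebra_simps)
  have W_mono: "W \<phi> \<le> W \<psi>" if "\<And>i. \<phi> i \<le> \<psi> i" for \<phi> \<psi>
    unfolding W_def using h that by (intro add_mono sum_mono mult_left_mono) auto
  have W_g: "W (\<lambda>i. (v i)^2) = gnorm2 h N v" for v
    unfolding W_def gnorm2_def by (simp add: sum_distrib_left algebra_simps)
  define E where "E k = W (\<lambda>i. u i k * Fa i k)" for k
  define B where "B k = u 0 k * Fh 0 k + u N k * Fh N k" for k
  define D where "D k = h * (\<Sum>m<N. (dx h (\<lambda>j. u j k) m)^2)" for k
  define R where "R k = (\<Sum>i=1..N-1. h * u i k * f i k) + h / 2 * (u 0 k * f 0 k + u N k * f N k)" for k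
  define FF where "FF k = ((h * f 0 k)^2 + (h * f N k)^2) / (8 * \<nu>) + h * (\<Sum>i=1..N-1. (f i k)^2) / \<mu>" for k
  have ident: "E k + B k + D k = R k" if k: "k \<in> {1..n}" for k
  proof -
    define v where "v j = u j k" for j
    have kT: "1 \<le> k" "k \<le> N\<^sub>T" using k n by auto
    have int: "(\<Sum>i=1..N-1. h * u i k * Fa i k) = (\<Sum>i=1..N-1. h * v i * dxx h v i) + (\<Sum>i=1..N-1. h * u i k * f i k)"
      unfolding sum.distrib[symmetric]
    proof (rule sum.cong[OF refl])
      fix i assume "i \<in> {1..N-1}"
      then have "Fa i k = dxx h v i + f i k" unfolding Fa_def v_def N_def using interior[OF _ _ kT] by auto
      then show "h * u i k * Fa i k = h * v i * dxx h v i + h * u i k * f i k" unfolding v_def by (simp add: algebra_simps)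
    qed
    have lft: "h / 2 * (u 0 k * Fa 0 k) = v 0 * dx h v 0 - u 0 k * Fh 0 k + h / 2 * (u 0 k * f 0 k)"
    proof -
      have "Fa 0 k = 2 / h * (dx h v 0 - Fh 0 k) + f 0 k" unfolding Fa_def Fh_def v_def using left[OF kT] by simp
      then have e: "h / 2 * Fa 0 k = dx h v 0 - Fh 0 k + h / 2 * f 0 k" using h by (simp add: field_simps)
      have "h / 2 * (u 0 k * Fa 0 k) = u 0 k * (h / 2 * Fa 0 k)" by simp
      also have "\<dots> = u 0 k * (dx h v 0 - Fh 0 k + h / 2 * f 0 k)" unfolding e ..
      finally show ?thesis unfolding v_def by (simp add: algebra_simps)
    qed
    have rgt: "h / 2 * (u N k * Fa N k) = - (v N * dx h v (N - 1)) - u N k * Fh N k + h / 2 * (u N k * f N k)"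
    proof -
      have "Fa N k = 2 / h * (- dx h v (N - 1) - Fh N k) + f N k" unfolding Fa_def Fh_def v_def N_def using right[OF kT] by simp
      then have e: "h / 2 * Fa N k = - dx h v (N - 1) - Fh N k + h / 2 * f N k" using h by (simp add: field_simps)
      have "h / 2 * (u N k * Fa N k) = u N k * (h / 2 * Fa N k)" by simp
      also have "\<dots> = u N k * (- dx h v (N - 1) - Fh N k + h / 2 * f N k)" unfolding e ..
      finally show ?thesis unfolding v_def by (simp add: algebra_simps)
    qed
    have sb: "(\<Sum>i=1..N-1. h * v i * dxx h v i) + v 0 * dx h v 0 - v N * dx h v (N - 1) = - D k"
      unfolding D_def v_def[symmetric] using sbp[OF h N1] by simp
    have "E k = h / 2 * (u 0 k * Fa 0 k) + (\<Sum>i=1..N-1. h * u i k * Fa i k) + h / 2 * (u N k * Fa N k)"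
      unfolding E_def W_def by (simp add: algebra_simps)
    moreover have dd: "h / 2 * (u 0 k * f 0 k + u N k * f N k) = h / 2 * (u 0 k * f 0 k) + h / 2 * (u N k * f N k)"
      by (simp only: distrib_left)
    ultimately show ?thesis unfolding B_def R_def using int lft rgt sb by linarith
  qed
  have young: "R k \<le> \<mu> / 4 * gnorm2 h N (\<lambda>i. u i k) + \<nu> / 2 * ((u 0 k)^2 + (u N k)^2) + FF k" for k
  proof -
    have i1: "(\<Sum>i=1..N-1. h * u i k * f i k) \<le> (\<Sum>i=1..N-1. \<mu> / 4 * (h * (u i k)^2) + h * (f i k)^2 / \<mu>)"
    proof (rule sum_mono)
      fix i
      have "h * (u i k * f i k) \<le> h * (\<mu> / 4 * (u i k)^2 + (f i k)^2 / \<mu>)"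
        using young1[OF mu_pos'] h by (intro mult_left_mono) auto
      then show "h * u i k * f i k \<le> \<mu> / 4 * (h * (u i k)^2) + h * (f i k)^2 / \<mu>"
        by (simp add: algebra_simps)
    qed
    have i2: "(\<Sum>i=1..N-1. \<mu> / 4 * (h * (u i k)^2) + h * (f i k)^2 / \<mu>)
        = \<mu> / 4 * (\<Sum>i=1..N-1. h * (u i k)^2) + h * (\<Sum>i=1..N-1. (f i k)^2) / \<mu>"
      by (simp add: sum.distrib sum_distrib_left sum_divide_distrib)
    have i3: "(\<Sum>i=1..N-1. h * (u i k)^2) \<le> gnorm2 h N (\<lambda>i. u i k)"
    proof -
      have "gnorm2 h N (\<lambda>i. u i k) = h / 2 * (u 0 k)^2 + (\<Sum>i=1..N-1. h * (u i k)^2) + h / 2 * (u N k)^2"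
        using W_g[of "\<lambda>i. u i k"] unfolding W_def by simp
      moreover have "h / 2 * (u 0 k)^2 \<ge> 0" "h / 2 * (u N k)^2 \<ge> 0" using h by auto
      ultimately show ?thesis by linarith
    qed
    have i4: "\<mu> / 4 * (\<Sum>i=1..N-1. h * (u i k)^2) \<le> \<mu> / 4 * gnorm2 h N (\<lambda>i. u i k)"
      using i3 mu_pos' by (intro mult_left_mono) auto
    have b1: "h / 2 * (u 0 k * f 0 k) \<le> \<nu> / 2 * (u 0 k)^2 + (h * f 0 k)^2 / (8 * \<nu>)" by (rule young2[OF nu_pos'])
    have b2: "h / 2 * (u N k * f N k) \<le> \<nu> / 2 * (u N k)^2 + (h * f N k)^2 / (8 * \<nu>)" by (rule young2[OF nu_pos'])
    have r: "R k = (\<Sum>i=1..N-1. h * u i k * f i k) + h / 2 * (u 0 k * f 0 k) + h / 2 * (u N k * f N k)"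
      unfolding R_def by (simp add: distrib_left)
    have ff: "FF k = (h * f 0 k)^2 / (8 * \<nu>) + (h * f N k)^2 / (8 * \<nu>) + h * (\<Sum>i=1..N-1. (f i k)^2) / \<mu>"
      unfolding FF_def by (simp add: add_divide_distrib)
    have nn: "\<nu> / 2 * ((u 0 k)^2 + (u N k)^2) = \<nu> / 2 * (u 0 k)^2 + \<nu> / 2 * (u N k)^2" by (simp only: distrib_left)
    show ?thesis unfolding r ff nn using i1 i2 i4 b1 b2 by linarith
  qed
  define \<eta> where "\<eta> = 2 * (1 + sqrt (1 + L^2 * \<mu>)) / (L * \<mu>)"
  have eta: "\<eta> > 0" "1 / L + 1 / \<eta> = \<eta> * \<mu> / 4" unfolding \<eta>_def using eta_id[OF Lpos mu_pos'] by auto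
  have sob: "(gnorm_inf N (\<lambda>i. u i k))^2 \<le> \<eta> * (\<mu> / 4 * gnorm2 h N (\<lambda>i. u i k) + D k)" for k
  proof -
    have "(gnorm_inf N (\<lambda>i. u i k))^2 \<le> gnorm2 h N (\<lambda>i. u i k) / L + gnorm2 h N (\<lambda>i. u i k) / \<eta> + \<eta> * D k"
      using sobolev[OF h N1 eta(1), of "\<lambda>i. u i k"] unfolding D_def Lh by simp
    also have "gnorm2 h N (\<lambda>i. u i k) / L + gnorm2 h N (\<lambda>i. u i k) / \<eta> = gnorm2 h N (\<lambda>i. u i k) * (1 / L + 1 / \<eta>)"
      by (simp add: algebra_simps)
    also have "\<dots> = \<eta> * (\<mu> / 4 * gnorm2 h N (\<lambda>i. u i k))" unfolding eta(2) by simp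
    finally show ?thesis by (simp add: algebra_simps)
  qed
  define Sg where "Sg = dt * (\<Sum>k=1..n. gnorm2 h N (\<lambda>i. u i k))"
  define Sb where "Sb = dt * (\<Sum>k=1..n. (u 0 k)^2 + (u N k)^2)"
  have SE: "dt * (\<Sum>k=1..n. E k) \<ge> \<mu> / 2 * Sg - \<rho> * gnorm2 h N (\<lambda>i. u i 0)"
  proof -
    have "dt * (\<Sum>k=1..n. E k) = W (\<lambda>i. dt * (\<Sum>k=1..n. u i k * Fa i k))"
      unfolding E_def W_cmul W_sum ..
    also have "\<dots> \<ge> W (\<lambda>i. \<mu> / 2 * (dt * (\<Sum>k=1..n. (u i k)^2)) - \<rho> * (u i 0)^2)"
      by (rule W_mono) (rule PEa)
    also have "W (\<lambda>i. \<mu> / 2 * (dt * (\<Sum>k=1..n. (u i k)^2)) - \<rho> * (u i 0)^2)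
       = \<mu> / 2 * W (\<lambda>i. dt * (\<Sum>k=1..n. (u i k)^2)) - \<rho> * W (\<lambda>i. (u i 0)^2)"
      by (rule W_lin)
    also have "W (\<lambda>i. dt * (\<Sum>k=1..n. (u i k)^2)) = Sg"
      unfolding Sg_def W_cmul W_sum W_g ..
    also have "W (\<lambda>i. (u i 0)^2) = gnorm2 h N (\<lambda>i. u i 0)" by (rule W_g)
    finally show ?thesis .
  qed
  have SB: "dt * (\<Sum>k=1..n. B k) \<ge> \<nu> / 2 * Sb - \<rho>h * ((u 0 0)^2 + (u N 0)^2)"
  proof -
    have "dt * (\<Sum>k=1..n. B k) = dt * (\<Sum>k=1..n. u 0 k * Fh 0 k) + dt * (\<Sum>k=1..n. u N k * Fh N k)"
      unfolding B_def by (simp add: sum.distrib distrib_left)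
    moreover have "Sb = dt * (\<Sum>k=1..n. (u 0 k)^2) + dt * (\<Sum>k=1..n. (u N k)^2)"
      unfolding Sb_def by (simp add: sum.distrib distrib_left)
    ultimately show ?thesis using PEh[of 0] PEh[of N] by (simp add: algebra_simps)
  qed
  have SR: "dt * (\<Sum>k=1..n. R k) \<le> \<mu> / 4 * Sg + \<nu> / 2 * Sb + dt * (\<Sum>k=1..n. FF k)"
  proof -
    have "dt * (\<Sum>k=1..n. R k) \<le> dt * (\<Sum>k=1..n. \<mu> / 4 * gnorm2 h N (\<lambda>i. u i k) + \<nu> / 2 * ((u 0 k)^2 + (u N k)^2) + FF k)"
      using dt young by (intro mult_left_mono sum_mono) auto
    also have "\<dots> = \<mu> / 4 * Sg + \<nu> / 2 * Sb + dt * (\<Sum>k=1..n. FF k)"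
      unfolding Sg_def Sb_def by (simp add: sum.distrib sum_distrib_left algebra_simps)
    finally show ?thesis .
  qed
  have SI: "dt * (\<Sum>k=1..n. E k) + dt * (\<Sum>k=1..n. B k) + dt * (\<Sum>k=1..n. D k) = dt * (\<Sum>k=1..n. R k)"
  proof -
    have "(\<Sum>k=1..n. E k + B k + D k) = (\<Sum>k=1..n. R k)" using ident by (intro sum.cong) auto
    then show ?thesis by (simp add: sum.distrib distrib_left[symmetric])
  qed
  define Rhs where "Rhs = \<rho> * gnorm2 h N (\<lambda>i. u i 0) + \<rho>h * ((u 0 0)^2 + (u N 0)^2) + dt * (\<Sum>k=1..n. FF k)"
  have main: "\<mu> / 4 * Sg + dt * (\<Sum>k=1..n. D k) \<le> Rhs"
    unfolding Rhs_def using SE SB SR SI by linarith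
  have SS: "dt * (\<Sum>k=1..n. (gnorm_inf N (\<lambda>i. u i k))^2) \<le> \<eta> * (\<mu> / 4 * Sg + dt * (\<Sum>k=1..n. D k))"
  proof -
    have "dt * (\<Sum>k=1..n. (gnorm_inf N (\<lambda>i. u i k))^2) \<le> dt * (\<Sum>k=1..n. \<eta> * (\<mu> / 4 * gnorm2 h N (\<lambda>i. u i k) + D k))"
      using dt sob by (intro mult_left_mono sum_mono) auto
    also have "\<dots> = \<eta> * (\<mu> / 4 * Sg + dt * (\<Sum>k=1..n. D k))"
      unfolding Sg_def by (simp add: sum.distrib sum_distrib_left algebra_simps)
    finally show ?thesis .
  qed
  have fin: "dt * (\<Sum>k=1..n. (gnorm_inf N (\<lambda>i. u i k))^2) \<le> \<eta> * Rhs"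
    using SS main eta(1) by (meson mult_left_mono less_imp_le order_trans)
  have FFs: "dt * (\<Sum>k=1..n. FF k) = dt / (8 * \<nu>) * (\<Sum>k=1..n. (h * f 0 k)^2 + (h * f N k)^2)
      + dt / \<mu> * (\<Sum>k=1..n. h * (\<Sum>i=1..N-1. (f i k)^2))"
    unfolding FF_def by (simp add: sum.distrib sum_distrib_left sum_divide_distrib add_divide_distrib algebra_simps)
  show ?thesis
    using fin unfolding Let_def Rhs_def FFs \<eta>_def \<rho>_def \<mu>_def \<rho>h_def \<nu>_def tn_def tn1_def N_def
    by (simp only: add.assoc)
qed


end
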